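(* Let $X$ be a quasi-Banach function space over $\mathbf{R}^d$. If $X\in A$, then $X'$ has the saturation property and hence is a Banach function space, and $X'\in A$ with $[X']_A\le[X]_A$. If $X$ is a Banach function space over $\mathbf{R}^d$ with the Fatou property, then $X\in A$ if and only if $X'\in A$, with $[X']_A=[X]_A$. The same statements hold with $A$ replaced by $A_{\mathrm{strong}}$, and with $A$ replaced by $A_{\mathrm{sparse}}$ (with the corresponding constants $[\cdot]_{A_{\mathrm{strong}}}$, $[\cdot]_{A_{\mathrm{sparse}}}$).
   Context: Cubes are axis-parallel cubes in $\mathbf{R}^d$. A quasi-Banach function space over $\mathbf{R}^d$ is a complete quasi-normed space $X\subseteq L^0(\mathbf{R}^d)$ with the ideal property (if $f\in X$, $|g|\le|f|$ then $g\in X$, $\|g\|_X\le\|f\|_X$) and the saturation property (every set of positive measure contains a subset $F$ of positive measure with $\mathbf{1}_F\in X$); Banach function space if the quasi-norm is a norm. Köthe dual: $X'=\{g:fg\in L^1\ \forall f\in X\}$, $\|g\|_{X'}=\sup_{\|f\|_X=1}\int|fg|$. Fatou property: $0\le f_n\uparrow f$ a.e., $\sup\|f_n\|_X<\infty$ imply $f\in X$, $\|f\|_X=\sup\|f_n\|_X$. $X\in A$: $\mathbf{1}_Q\in X\cap X'$ for all cubes and $[X]_A=\sup_Q|Q|^{-1}\|\mathbf{1}_Q\|_X\|\mathbf{1}_Q\|_{X'}<\infty$. With $A_{\mathcal{P}}f=\sum_{Q\in\mathcal{P}}\big(\frac1{|Q|}\int_Q|f|\big)\mathbf{1}_Q$: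 $X\in A_{\mathrm{strong}}$ (resp. $A_{\mathrm{sparse}}$) means there is $C$ with $\|A_{\mathcal{P}}f\|_X\le C\|f\|_X$ for all $f\in X$ and all pairwise disjoint (resp. sparse) collections of cubes $\mathcal{P}$, the least such $C$ being $[X]_{A_{\mathrm{strong}}}$ (resp. $[X]_{A_{\mathrm{sparse}}}$). A collection $\mathcal{S}$ is sparse if there are pairwise disjoint $E_Q\subseteq Q$ with $|E_Q|\ge\frac12|Q|$. *)

theory Defs
  imports "HOL-Analysis.Analysis"
begin

definition cube :: "'a::euclidean_space set \<Rightarrow> bool" where
  "cube Q \<longleftrightarrow> (\<exists>a r. r > 0 \<and> Q = {x. \<forall>i\<in>Basis. a \<bullet> i \<le> x \<bullet> i \<and> x \<bullet> i < a \<bullet> i + r})"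

text \<open>Elements of L^0 are identified up to a.e. equality; this is
  enforced by the ideal property below.\<close>
definition quasi_normed_space :: "('a::euclidean_space \<Rightarrow> real) set \<Rightarrow> (('a \<Rightarrow> real) \<Rightarrow> real) \<Rightarrow> bool" where
  "quasi_normed_space X N \<longleftrightarrow>
     X \<subseteq> borel_measurable lebesgue \<and>
     (\<lambda>x. 0) \<in> X \<and> (\<forall>f\<in>X. \<forall>g\<in>X. (\<lambda>x. f x + g x) \<in> X) \<and> (\<forall>c. \<forall>f\<in>X. (\<lambda>x. c * f x) \<in> X) \<and>
     (\<forall>f\<in>X. 0 \<le> N f) \<and>
     (\<forall>f\<in>X. N f = 0 \<longleftrightarrow> (AE x in lebesgue. f x = 0)) \<and>
     (\<forall>c. \<forall>f\<in>X. N (\<lambda>x. c * f x) = \<bar>c\<bar> * N f) \<and>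
     (\<exists>K\<ge>1. \<forall>f\<in>X. \<forall>g\<in>X. N (\<lambda>x. f x + g x) \<le> K * (N f + N g))"

definition complete_qn :: "('a::euclidean_space \<Rightarrow> real) set \<Rightarrow> (('a \<Rightarrow> real) \<Rightarrow> real) \<Rightarrow> bool" where
  "complete_qn X N \<longleftrightarrow>
     (\<forall>u. (\<forall>n. u n \<in> X) \<and> (\<forall>e>0. \<exists>M. \<forall>m\<ge>M. \<forall>n\<ge>M. N (\<lambda>x. u m x - u n x) < e)
          \<longrightarrow> (\<exists>f\<in>X. (\<lambda>n. N (\<lambda>x. u n x - f x)) \<longlonglongrightarrow> 0))"

definition ideal_property :: "('a::euclidean_space \<Rightarrow> real) set \<Rightarrow> (('a \<Rightarrow> real) \<Rightarrow> real) \<Rightarrow> bool" where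
  "ideal_property X N \<longleftrightarrow>
     (\<forall>f\<in>X. \<forall>g\<in>borel_measurable lebesgue. (AE x in lebesgue. \<bar>g x\<bar> \<le> \<bar>f x\<bar>) \<longrightarrow> g \<in> X \<and> N g \<le> N f)"

definition saturation_property :: "('a::euclidean_space \<Rightarrow> real) set \<Rightarrow> bool" where
  "saturation_property X \<longleftrightarrow>
     (\<forall>E\<in>sets lebesgue. emeasure lebesgue E > 0 \<longrightarrow>
        (\<exists>F\<in>sets lebesgue. F \<subseteq> E \<and> emeasure lebesgue F > 0 \<and> indicator F \<in> X))"

definition quasi_BFS :: "('a::euclidean_space \<Rightarrow> real) set \<Rightarrow> (('a \<Rightarrow> real) \<Rightarrow> real) \<Rightarrow> bool" where
  "quasi_BFS X N \<longleftrightarrow> quasi_normed_space X N \<and> complete_qn X N \<and> ideal_property X N \<and> saturation_property X"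

definition BFS :: "('a::euclidean_space \<Rightarrow> real) set \<Rightarrow> (('a \<Rightarrow> real) \<Rightarrow> real) \<Rightarrow> bool" where
  "BFS X N \<longleftrightarrow> quasi_BFS X N \<and> (\<forall>f\<in>X. \<forall>g\<in>X. N (\<lambda>x. f x + g x) \<le> N f + N g)"

definition kothe :: "('a::euclidean_space \<Rightarrow> real) set \<Rightarrow> ('a \<Rightarrow> real) set" where
  "kothe X = {g \<in> borel_measurable lebesgue. \<forall>f\<in>X. integrable lebesgue (\<lambda>x. f x * g x)}"

definition kothe_norm :: "('a::euclidean_space \<Rightarrow> real) set \<Rightarrow> (('a \<Rightarrow> real) \<Rightarrow> real) \<Rightarrow> ('a \<Rightarrow> real) \<Rightarrow> real" where
  "kothe_norm X N g = Sup ((\<lambda>f. \<integral>x. \<bar>f x * g x\<bar> \<partial>lebesgue) ` {f \<in> X. N f = 1})"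

definition fatou_property :: "('a::euclidean_space \<Rightarrow> real) set \<Rightarrow> (('a \<Rightarrow> real) \<Rightarrow> real) \<Rightarrow> bool" where
  "fatou_property X N \<longleftrightarrow>
     (\<forall>u f. (\<forall>n. u n \<in> X) \<and> f \<in> borel_measurable lebesgue \<and>
        (AE x in lebesgue. (\<forall>n. 0 \<le> u n x \<and> u n x \<le> u (Suc n) x) \<and> (\<lambda>n. u n x) \<longlonglongrightarrow> f x) \<and>
        bounded (range (\<lambda>n. N (u n)))
        \<longrightarrow> f \<in> X \<and> N f = (SUP n. N (u n)))"

definition A_ratios :: "('a::euclidean_space \<Rightarrow> real) set \<Rightarrow> (('a \<Rightarrow> real) \<Rightarrow> real) \<Rightarrow> real set" where
  "A_ratios X N = {N (indicator Q) * kothe_norm X N (indicator Q) / measure lebesgue Q | Q. cube Q}"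

definition in_A :: "('a::euclidean_space \<Rightarrow> real) set \<Rightarrow> (('a \<Rightarrow> real) \<Rightarrow> real) \<Rightarrow> bool" where
  "in_A X N \<longleftrightarrow> (\<forall>Q. cube Q \<longrightarrow> indicator Q \<in> X \<and> indicator Q \<in> kothe X) \<and> bdd_above (A_ratios X N)"

definition A_const :: "('a::euclidean_space \<Rightarrow> real) set \<Rightarrow> (('a \<Rightarrow> real) \<Rightarrow> real) \<Rightarrow> real" where
  "A_const X N = Sup (A_ratios X N)"

text \<open>Averaging operators, valued in [0,\<infinity>] (the average of |f| over Q may be infinite).\<close>
definition avg :: "'a::euclidean_space set \<Rightarrow> ('a \<Rightarrow> real) \<Rightarrow> ennreal" where
  "avg Q f = (\<integral>\<^sup>+x\<in>Q. ennreal \<bar>f x\<bar> \<partial>lebesgue) / emeasure lebesgue Q"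

definition avg_op :: "'a::euclidean_space set set \<Rightarrow> ('a \<Rightarrow> real) \<Rightarrow> 'a \<Rightarrow> ennreal" where
  "avg_op P f x = (\<Sum>\<^sub>\<infinity>Q\<in>P. avg Q f * indicator Q x)"

definition avg_bound :: "('a::euclidean_space set set \<Rightarrow> bool) \<Rightarrow> ('a \<Rightarrow> real) set \<Rightarrow> (('a \<Rightarrow> real) \<Rightarrow> real) \<Rightarrow> real \<Rightarrow> bool" where
  "avg_bound adm X N C \<longleftrightarrow>
     (\<forall>P. adm P \<longrightarrow> (\<forall>f\<in>X. (AE x in lebesgue. avg_op P f x < \<infinity>) \<and>
        (\<lambda>x. enn2real (avg_op P f x)) \<in> X \<and> N (\<lambda>x. enn2real (avg_op P f x)) \<le> C * N f))"

definition disjoint_cubes :: "'a::euclidean_space set set \<Rightarrow> bool" where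
  "disjoint_cubes P \<longleftrightarrow> P \<subseteq> Collect cube \<and> pairwise disjnt P"

definition sparse :: "'a::euclidean_space set set \<Rightarrow> bool" where
  "sparse P \<longleftrightarrow> P \<subseteq> Collect cube \<and>
     (\<exists>E. (\<forall>Q\<in>P. E Q \<in> sets lebesgue \<and> E Q \<subseteq> Q \<and> measure lebesgue (E Q) \<ge> measure lebesgue Q / 2)
          \<and> disjoint_family_on E P)"

definition in_A_strong :: "('a::euclidean_space \<Rightarrow> real) set \<Rightarrow> (('a \<Rightarrow> real) \<Rightarrow> real) \<Rightarrow> bool" where
  "in_A_strong X N \<longleftrightarrow> (\<exists>C. avg_bound disjoint_cubes X N C)"

definition A_strong_const :: "('a::euclidean_space \<Rightarrow> real) set \<Rightarrow> (('a \<Rightarrow> real) \<Rightarrow> real) \<Rightarrow> real" where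
  "A_strong_const X N = Inf {C. 0 \<le> C \<and> avg_bound disjoint_cubes X N C}"

definition in_A_sparse :: "('a::euclidean_space \<Rightarrow> real) set \<Rightarrow> (('a \<Rightarrow> real) \<Rightarrow> real) \<Rightarrow> bool" where
  "in_A_sparse X N \<longleftrightarrow> (\<exists>C. avg_bound sparse X N C)"

definition A_sparse_const :: "('a::euclidean_space \<Rightarrow> real) set \<Rightarrow> (('a \<Rightarrow> real) \<Rightarrow> real) \<Rightarrow> real" where
  "A_sparse_const X N = Inf {C. 0 \<le> C \<and> avg_bound sparse X N C}"

end

theory Submission
  imports Defs
begin


lemma qn_facts:
  assumes "quasi_normed_space X N"
  shows "X \<subseteq> borel_measurable lebesgue" "(\<lambda>x. 0) \<in> X"
    "\<And>f g. f\<in>X \<Longrightarrow> g\<in>X \<Longrightarrow> (\<lambda>x. f x + g x) \<in> X"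
    "\<And>c f. f\<in>X \<Longrightarrow> (\<lambda>x. c * f x) \<in> X"
    "\<And>f. f\<in>X \<Longrightarrow> 0 \<le> N f"
    "\<And>f. f\<in>X \<Longrightarrow> N f = 0 \<longleftrightarrow> (AE x in lebesgue. f x = 0)"
    "\<And>c f. f\<in>X \<Longrightarrow> N (\<lambda>x. c * f x) = \<bar>c\<bar> * N f"
    "\<exists>K\<ge>1. \<forall>f\<in>X. \<forall>g\<in>X. N (\<lambda>x. f x + g x) \<le> K * (N f + N g)"
  using assms unfolding quasi_normed_space_def by blast+

lemma ideal_D:
  assumes "ideal_property X N" "f \<in> X" "g \<in> borel_measurable lebesgue"
    "AE x in lebesgue. \<bar>g x\<bar> \<le> \<bar>f x\<bar>"
  shows "g \<in> X" "N g \<le> N f"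
  using assms unfolding ideal_property_def by blast+

lemma ideal_abs:
  assumes "ideal_property X N" "quasi_normed_space X N" "f \<in> X"
  shows "(\<lambda>x. \<bar>f x\<bar>) \<in> X" "N (\<lambda>x. \<bar>f x\<bar>) = N f"
proof -
  have m: "f \<in> borel_measurable lebesgue" using qn_facts(1)[OF assms(2)] assms(3) by blast
  show a: "(\<lambda>x. \<bar>f x\<bar>) \<in> X" using ideal_D(1)[OF assms(1,3)] m by auto
  have "N (\<lambda>x. \<bar>f x\<bar>) \<le> N f" using ideal_D(2)[OF assms(1,3)] m by auto
  moreover have "N f \<le> N (\<lambda>x. \<bar>f x\<bar>)" using ideal_D(2)[OF assms(1) a] m by auto
  ultimately show "N (\<lambda>x. \<bar>f x\<bar>) = N f" by simp
qed

lemma qn_diff: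
  assumes "quasi_normed_space X N" "f \<in> X" "g \<in> X"
  shows "(\<lambda>x. f x - g x) \<in> X"
proof -
  have "(\<lambda>x. (-1) * g x) \<in> X" using qn_facts(4)[OF assms(1) assms(3)] .
  from qn_facts(3)[OF assms(1) assms(2) this] show ?thesis by simp
qed

lemma qn_sum:
  assumes "quasi_normed_space X N" "\<And>j. j \<in> S \<Longrightarrow> a j \<in> X" "finite S"
  shows "(\<lambda>x. \<Sum>j\<in>S. a j x) \<in> X"
  using assms(3,2)
proof (induction S rule: finite_induct)
  case empty then show ?case using qn_facts(2)[OF assms(1)] by simp
next
  case (insert j S)
  then show ?case using qn_facts(3)[OF assms(1), of "a j" "\<lambda>x. \<Sum>j\<in>S. a j x"] by simp
qed

lemma kothe_holder:
  assumes qn: "quasi_normed_space Y NY"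
    and bdd: "bdd_above ((\<lambda>f. \<integral>x. \<bar>f x * g x\<bar> \<partial>lebesgue) ` {f\<in>Y. NY f = 1})"
    and f: "f \<in> Y"
  shows "(\<integral>x. \<bar>f x * g x\<bar> \<partial>lebesgue) \<le> NY f * kothe_norm Y NY g"
proof (cases "NY f = 0")
  case True
  then have "AE x in lebesgue. f x = 0" using qn_facts(6)[OF qn f] by simp
  then have "AE x in lebesgue. \<bar>f x * g x\<bar> = 0" by auto
  then have "(\<integral>x. \<bar>f x * g x\<bar> \<partial>lebesgue) = 0"
    by (rule integral_eq_zero_AE)
  then show ?thesis using True by simp
next
  case False
  then have pos: "NY f > 0" using qn_facts(5)[OF qn f] by simp
  define f' where "f' = (\<lambda>x. inverse (NY f) * f x)"
  have "f' \<in> Y" unfolding f'_def using qn_facts(4)[OF qn f] .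
  moreover have "NY f' = 1" unfolding f'_def using qn_facts(7)[OF qn f] pos by simp
  ultimately have "(\<integral>x. \<bar>f' x * g x\<bar> \<partial>lebesgue) \<le> kothe_norm Y NY g"
    unfolding kothe_norm_def by (intro cSup_upper bdd) auto
  moreover have "(\<integral>x. \<bar>f' x * g x\<bar> \<partial>lebesgue) = inverse (NY f) * (\<integral>x. \<bar>f x * g x\<bar> \<partial>lebesgue)"
    unfolding f'_def using pos by (simp add: abs_mult mult.assoc)
  ultimately show ?thesis using pos by (simp add: field_simps)
qed



lemma kothe_D:
  assumes "g \<in> kothe Y" "f \<in> Y"
  shows "integrable lebesgue (\<lambda>x. f x * g x)" "g \<in> borel_measurable lebesgue"
  using assms unfolding kothe_def by auto

lemma kothe_bdd:
  assumes qn: "quasi_normed_space Y NY" and cp: "complete_qn Y NY"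
    and idl: "ideal_property Y NY" and g: "g \<in> kothe Y"
  shows "bdd_above ((\<lambda>f. \<integral>x. \<bar>f x * g x\<bar> \<partial>lebesgue) ` {f\<in>Y. NY f = 1})"
proof (rule ccontr)
  assume nb: "\<not> ?thesis"
  obtain K where K: "K \<ge> 1" "\<forall>f\<in>Y. \<forall>g\<in>Y. NY (\<lambda>x. f x + g x) \<le> K * (NY f + NY g)"
    using qn_facts(8)[OF qn] by blast
  have meas: "\<And>f. f \<in> Y \<Longrightarrow> f \<in> borel_measurable lebesgue" using qn_facts(1)[OF qn] by blast
  have ex: "\<exists>f. f \<in> Y \<and> NY f = 1 \<and> (\<integral>x. \<bar>f x * g x\<bar> \<partial>lebesgue) > M" for M
  proof -
    have "\<not> (\<forall>y\<in>(\<lambda>f. \<integral>x. \<bar>f x * g x\<bar> \<partial>lebesgue) ` {f\<in>Y. NY f = 1}. y \<le> M)"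
      using nb unfolding bdd_above_def by blast
    then obtain f where "f \<in> Y" "NY f = 1" "\<not> (\<integral>x. \<bar>f x * g x\<bar> \<partial>lebesgue) \<le> M" by blast
    then show ?thesis by (intro exI[of _ f]) simp
  qed
  then have "\<forall>j::nat. \<exists>f. f \<in> Y \<and> NY f = 1 \<and> (\<integral>x. \<bar>f x * g x\<bar> \<partial>lebesgue) > real j * (2*K)^j"
    by blast
  then obtain F where F': "\<forall>j. F j \<in> Y \<and> NY (F j) = 1 \<and> (\<integral>x. \<bar>F j x * g x\<bar> \<partial>lebesgue) > real j * (2*K)^j"
    using choice[of "\<lambda>j f. f \<in> Y \<and> NY f = 1 \<and> (\<integral>x. \<bar>f x * g x\<bar> \<partial>lebesgue) > real j * (2*K)^j"] by blast
  have F: "\<And>j. F j \<in> Y" "\<And>j. NY (F j) = 1"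
    "\<And>j. (\<integral>x. \<bar>F j x * g x\<bar> \<partial>lebesgue) > real j * (2*K)^j" using F' by auto
  define c where "c j = inverse ((2*K)^j)" for j :: nat
  have cpos: "c j > 0" for j using K unfolding c_def by simp
  have cSuc: "2 * K * c (Suc j) = c j" for j using K unfolding c_def by (simp add: field_simps)
  define a where "a j = (\<lambda>x. c j * \<bar>F j x\<bar>)" for j
  have aY: "a j \<in> Y" for j unfolding a_def using qn_facts(4)[OF qn ideal_abs(1)[OF idl qn F(1)]] .
  have aN: "NY (a j) = c j" for j unfolding a_def
    using qn_facts(7)[OF qn ideal_abs(1)[OF idl qn F(1)]] ideal_abs(2)[OF idl qn F(1)] F(2) cpos[of j]
    by simp
  have anonneg: "a j x \<ge> 0" for j x unfolding a_def using cpos[of j] by simp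
  define s where "s m = (\<lambda>x. \<Sum>j<m. a j x)" for m
  have sY: "s m \<in> Y" for m unfolding s_def by (rule qn_sum[OF qn]) (auto simp: aY)
  have N0: "NY (\<lambda>x. 0) = 0" using qn_facts(6)[OF qn qn_facts(2)[OF qn]] by simp
  have tail: "NY (\<lambda>x. \<Sum>j\<in>{k..<k+n}. a j x) \<le> 2 * K * c k" for n k
  proof (induction n arbitrary: k)
    case 0 then show ?case using N0 cpos[of k] K by simp
  next
    case (Suc n)
    have eq: "(\<lambda>x. \<Sum>j\<in>{k..<k+Suc n}. a j x) = (\<lambda>x. a k x + (\<Sum>j\<in>{Suc k..<Suc k+n}. a j x))"
      by (rule ext, subst sum.atLeast_Suc_lessThan) auto
    have rY: "(\<lambda>x. \<Sum>j\<in>{Suc k..<Suc k+n}. a j x) \<in> Y" by (rule qn_sum[OF qn]) (auto simp: aY)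
    have "NY (\<lambda>x. \<Sum>j\<in>{k..<k+Suc n}. a j x) \<le> K * (NY (a k) + NY (\<lambda>x. \<Sum>j\<in>{Suc k..<Suc k+n}. a j x))"
      unfolding eq using K(2)[rule_format, OF aY[of k] rY] by simp
    also have "\<dots> \<le> K * (c k + 2 * K * c (Suc k))"
      using Suc.IH[of "Suc k"] aN K by (intro mult_left_mono add_mono) auto
    also have "\<dots> = 2 * K * c k" using cSuc[of k] by simp
    finally show ?case .
  qed
  have cmono: "c k \<le> c M" if "M \<le> k" for k M
    unfolding c_def using K that by (intro le_imp_inverse_le power_increasing) auto
  have diff_tail: "NY (\<lambda>x. s m x - s k x) \<le> 2 * K * c k" if "k \<le> m" for m k
  proof -
    have e1: "{k..<k+(m-k)} = {k..<m}" using that by simp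
    have "(\<lambda>x. s m x - s k x) = (\<lambda>x. \<Sum>j\<in>{k..<k+(m-k)}. a j x)"
      unfolding s_def e1 lessThan_atLeast0
      by (rule ext, rule sum_diff_nat_ivl) (use that in auto)
    then show ?thesis using tail by simp
  qed
  have sym: "NY (\<lambda>x. s m x - s k x) = NY (\<lambda>x. s k x - s m x)" for m k
  proof -
    have "NY (\<lambda>x. (-1) * (s k x - s m x)) = NY (\<lambda>x. s k x - s m x)"
      using qn_facts(7)[OF qn qn_diff[OF qn sY[of k] sY[of m]], of "-1"] by simp
    moreover have "(\<lambda>x. (-1) * (s k x - s m x)) = (\<lambda>x. s m x - s k x)" by auto
    ultimately show ?thesis by simp
  qed
  have cauchy: "\<forall>e>0. \<exists>M. \<forall>m\<ge>M. \<forall>n\<ge>M. NY (\<lambda>x. s m x - s n x) < e"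
  proof (intro allI impI)
    fix e :: real assume e: "e > 0"
    obtain M where M: "(2*K)^M > 2 * K / e" using real_arch_pow[of "2*K" "2*K/e"] K by auto
    have "2 * K * c M < e" unfolding c_def using M e K by (simp add: field_simps)
    then have "\<forall>m\<ge>M. \<forall>n\<ge>M. NY (\<lambda>x. s m x - s n x) < e"
    proof (intro allI impI)
      fix m n assume mn: "M \<le> m" "M \<le> n" and lt: "2 * K * c M < e"
      show "NY (\<lambda>x. s m x - s n x) < e"
      proof (cases "n \<le> m")
        case True
        have "2 * K * c n \<le> 2 * K * c M" using cmono[OF mn(2)] K by simp
        then show ?thesis using diff_tail[OF True] lt by linarith
      next
        case False
        have "2 * K * c m \<le> 2 * K * c M" using cmono[OF mn(1)] K by simp
        then show ?thesis using diff_tail[of m n] False lt sym[of m n] by linarith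
      qed
    qed
    then show "\<exists>M. \<forall>m\<ge>M. \<forall>n\<ge>M. NY (\<lambda>x. s m x - s n x) < e" by blast
  qed
  obtain f where f: "f \<in> Y" "(\<lambda>n. NY (\<lambda>x. s n x - f x)) \<longlonglongrightarrow> 0"
    using cp sY cauchy unfolding complete_qn_def by blast
  have sle: "AE x in lebesgue. s m x \<le> f x" for m
  proof -
    define h where "h = (\<lambda>x. max 0 (s m x - f x))"
    have hm: "h \<in> borel_measurable lebesgue" unfolding h_def using meas[OF sY[of m]] meas[OF f(1)] by measurable
    have smono: "s m x \<le> s k x" if "m \<le> k" for k x
      unfolding s_def using that anonneg by (intro sum_mono2) auto
    have "NY h \<le> NY (\<lambda>x. s k x - f x)" if "m \<le> k" for k
    proof -
      have "AE x in lebesgue. \<bar>h x\<bar> \<le> \<bar>s k x - f x\<bar>"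
      proof (rule AE_I2)
        fix x have "s m x \<le> s k x" using smono[OF that] .
        then show "\<bar>h x\<bar> \<le> \<bar>s k x - f x\<bar>" unfolding h_def by auto
      qed
      then show ?thesis using ideal_D(2)[OF idl qn_diff[OF qn sY[of k] f(1)] hm] by blast
    qed
    then have "NY h \<le> 0"
      by (intro tendsto_lowerbound[OF f(2)] eventually_sequentiallyI[of m]) auto
    moreover have "AE x in lebesgue. \<bar>h x\<bar> \<le> \<bar>s m x - f x\<bar>" unfolding h_def by (intro AE_I2) auto
    then have hY: "h \<in> Y" using ideal_D(1)[OF idl qn_diff[OF qn sY[of m] f(1)] hm] by blast
    ultimately have "NY h = 0" using qn_facts(5)[OF qn hY] by simp
    then have "AE x in lebesgue. h x = 0" using qn_facts(6)[OF qn hY] by simp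
    then show ?thesis unfolding h_def by (auto elim!: eventually_mono simp: max_def split: if_splits)
  qed
  have fint: "integrable lebesgue (\<lambda>x. \<bar>f x * g x\<bar>)" using kothe_D(1)[OF g f(1)] by auto
  have big: "(\<integral>x. \<bar>f x * g x\<bar> \<partial>lebesgue) > real j" for j
  proof -
    have Fint: "integrable lebesgue (\<lambda>x. c j * \<bar>F j x * g x\<bar>)" using kothe_D(1)[OF g F(1)] by auto
    have "AE x in lebesgue. c j * \<bar>F j x * g x\<bar> \<le> \<bar>f x * g x\<bar>"
      using sle[of "Suc j"]
    proof (rule eventually_mono)
      fix x assume "s (Suc j) x \<le> f x"
      moreover have "a j x \<le> s (Suc j) x" unfolding s_def using anonneg
        by (intro member_le_sum) auto
      ultimately have "a j x \<le> \<bar>f x\<bar>" by simp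
      then have "a j x * \<bar>g x\<bar> \<le> \<bar>f x\<bar> * \<bar>g x\<bar>" by (intro mult_right_mono) auto
      then show "c j * \<bar>F j x * g x\<bar> \<le> \<bar>f x * g x\<bar>" unfolding a_def by (simp add: abs_mult mult.assoc)
    qed
    then have "(\<integral>x. c j * \<bar>F j x * g x\<bar> \<partial>lebesgue) \<le> (\<integral>x. \<bar>f x * g x\<bar> \<partial>lebesgue)"
      by (intro integral_mono_AE Fint fint)
    moreover have "(\<integral>x. c j * \<bar>F j x * g x\<bar> \<partial>lebesgue) = c j * (\<integral>x. \<bar>F j x * g x\<bar> \<partial>lebesgue)"
      by simp
    moreover have "c j * (\<integral>x. \<bar>F j x * g x\<bar> \<partial>lebesgue) > c j * (real j * (2*K)^j)"
      using F(3)[of j] cpos[of j] by simp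
    moreover have "c j * (real j * (2*K)^j) = real j"
    proof -
      have gen: "\<And>y::real. y \<noteq> 0 \<Longrightarrow> inverse y * (real j * y) = real j" by simp
      have "(2*K)^j \<noteq> 0" using K(1) by simp
      then show ?thesis unfolding c_def by (rule gen)
    qed
    ultimately show ?thesis by linarith
  qed
  obtain j :: nat where "real j \<ge> (\<integral>x. \<bar>f x * g x\<bar> \<partial>lebesgue)" using real_arch_simple by blast
  then show False using big[of j] by simp
qed



locale qbfs =
  fixes X :: "('a::euclidean_space \<Rightarrow> real) set" and N :: "('a \<Rightarrow> real) \<Rightarrow> real"
  assumes qb: "quasi_BFS X N"
begin

lemma qn: "quasi_normed_space X N" and cp: "complete_qn X N" and idl: "ideal_property X N"
  and sat: "saturation_property X"
  using qb unfolding quasi_BFS_def by auto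

lemma meas: "f \<in> X \<Longrightarrow> f \<in> borel_measurable lebesgue" using qn_facts(1)[OF qn] by blast

lemma sat_D:
  assumes "E \<in> sets lebesgue" "emeasure lebesgue E > 0"
  obtains F where "F \<in> sets lebesgue" "F \<subseteq> E" "emeasure lebesgue F > 0" "indicator F \<in> X"
  using sat assms unfolding saturation_property_def by blast

lemma N_indicator_pos:
  assumes "F \<in> sets lebesgue" "emeasure lebesgue F > 0" "indicator F \<in> X"
  shows "N (indicator F) > 0"
proof -
  have "N (indicator F) \<noteq> 0"
  proof
    assume "N (indicator F) = 0"
    then have "AE x in lebesgue. (indicator F x :: real) = 0" using qn_facts(6)[OF qn assms(3)] by simp
    then have "AE x in lebesgue. x \<notin> F" by (auto elim!: eventually_mono simp: indicator_def split: if_splits)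
    then have "emeasure lebesgue F = 0" using assms(1) by (simp add: AE_iff_measurable[OF _ refl])
    then show False using assms(2) by simp
  qed
  then show ?thesis using qn_facts(5)[OF qn assms(3)] by simp
qed

lemma unit_ex: "\<exists>f. f \<in> X \<and> N f = 1"
proof -
  have "emeasure lebesgue (UNIV :: 'a set) > 0" by simp
  then obtain F where F: "F \<in> sets lebesgue" "emeasure lebesgue F > 0" "indicator F \<in> X"
    using sat_D[of UNIV] by auto
  have pos: "N (indicator F) > 0" using N_indicator_pos[OF F] .
  define f where "f = (\<lambda>x. inverse (N (indicator F)) * indicator F x)"
  have "f \<in> X" unfolding f_def using qn_facts(4)[OF qn F(3)] .
  moreover have "N f = 1" unfolding f_def using qn_facts(7)[OF qn F(3)] pos by simp
  ultimately show ?thesis by blast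
qed

lemma unit_ne: "{f\<in>X. N f = 1} \<noteq> {}" using unit_ex by blast

lemma kbdd: "g \<in> kothe X \<Longrightarrow> bdd_above ((\<lambda>f. \<integral>x. \<bar>f x * g x\<bar> \<partial>lebesgue) ` {f\<in>X. N f = 1})"
  by (rule kothe_bdd[OF qn cp idl])

lemma holder: "f \<in> X \<Longrightarrow> g \<in> kothe X \<Longrightarrow> (\<integral>x. \<bar>f x * g x\<bar> \<partial>lebesgue) \<le> N f * kothe_norm X N g"
  by (rule kothe_holder[OF qn kbdd])

lemma kn_nonneg: assumes "g \<in> kothe X" shows "0 \<le> kothe_norm X N g"
proof -
  obtain f where f: "f \<in> X" "N f = 1" using unit_ex by blast
  have "0 \<le> (\<integral>x. \<bar>f x * g x\<bar> \<partial>lebesgue)" by simp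
  also have "\<dots> \<le> kothe_norm X N g" using holder[OF f(1) assms] f(2) by simp
  finally show ?thesis .
qed

lemma holder_nn:
  assumes "f \<in> X" "g \<in> kothe X"
  shows "(\<integral>\<^sup>+x. ennreal \<bar>f x * g x\<bar> \<partial>lebesgue) \<le> ennreal (N f * kothe_norm X N g)"
proof -
  have i: "integrable lebesgue (\<lambda>x. \<bar>f x * g x\<bar>)" using kothe_D(1)[OF assms(2,1)] by auto
  have "(\<integral>\<^sup>+x. ennreal \<bar>f x * g x\<bar> \<partial>lebesgue) = ennreal (\<integral>x. \<bar>f x * g x\<bar> \<partial>lebesgue)"
    by (rule nn_integral_eq_integral[OF i]) auto
  also have "\<dots> \<le> ennreal (N f * kothe_norm X N g)" using holder[OF assms] by (rule ennreal_leI)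
  finally show ?thesis .
qed

lemma kn_le:
  assumes gm: "g \<in> borel_measurable lebesgue" and C: "C \<ge> 0"
    and bd: "\<And>f. f \<in> X \<Longrightarrow> (\<integral>\<^sup>+x. ennreal \<bar>f x * g x\<bar> \<partial>lebesgue) \<le> ennreal (C * N f)"
  shows "g \<in> kothe X" "kothe_norm X N g \<le> C"
proof -
  have int: "integrable lebesgue (\<lambda>x. f x * g x)" if f: "f \<in> X" for f
  proof -
    have "(\<lambda>x. f x * g x) \<in> borel_measurable lebesgue" using meas[OF f] gm by measurable
    moreover have "(\<integral>\<^sup>+x. ennreal (norm (f x * g x)) \<partial>lebesgue) < \<infinity>"
      using bd[OF f] by (simp add: order_le_less_trans)
    ultimately show ?thesis by (simp add: integrable_iff_bounded)
  qed
  then show "g \<in> kothe X" unfolding kothe_def using gm by blast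
  show "kothe_norm X N g \<le> C" unfolding kothe_norm_def
  proof (rule cSup_least)
    show "(\<lambda>f. \<integral>x. \<bar>f x * g x\<bar> \<partial>lebesgue) ` {f \<in> X. N f = 1} \<noteq> {}" using unit_ne by blast
  next
    fix y assume "y \<in> (\<lambda>f. \<integral>x. \<bar>f x * g x\<bar> \<partial>lebesgue) ` {f \<in> X. N f = 1}"
    then obtain f where f: "f \<in> X" "N f = 1" and y: "y = (\<integral>x. \<bar>f x * g x\<bar> \<partial>lebesgue)" by blast
    have "ennreal y = (\<integral>\<^sup>+x. ennreal \<bar>f x * g x\<bar> \<partial>lebesgue)"
      unfolding y by (rule nn_integral_eq_integral[symmetric]) (use int[OF f(1)] in auto)
    also have "\<dots> \<le> ennreal C" using bd[OF f(1)] f(2) by simp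
    finally show "y \<le> C" using C by (simp add: ennreal_le_iff)
  qed
qed

end


lemma geom_tail_ennreal:
  assumes "c \<ge> 0"
  shows "(\<Sum>k. ennreal (c * (1/2)^(k+j))) = ennreal (c * 2 * (1/2)^j)"
proof -
  have "(\<lambda>k. (c * (1/2)^j) * (1/2::real)^k) sums ((c * (1/2)^j) * (1 / (1 - 1/2)))"
    by (intro sums_mult geometric_sums) simp
  then have "(\<lambda>k. c * (1/2::real)^(k+j)) sums (c * 2 * (1/2)^j)"
    by (simp add: power_add mult_ac)
  then show ?thesis using assms by (intro suminf_ennreal_eq) auto
qed

context qbfs
begin

lemma kothe_meas: "g \<in> kothe X \<Longrightarrow> g \<in> borel_measurable lebesgue" unfolding kothe_def by blast

lemma kothe_add: "g \<in> kothe X \<Longrightarrow> h \<in> kothe X \<Longrightarrow> (\<lambda>x. g x + h x) \<in> kothe X"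
  unfolding kothe_def by (auto simp: distrib_left intro!: integrable_add)

lemma kothe_cmult: "g \<in> kothe X \<Longrightarrow> (\<lambda>x. c * g x) \<in> kothe X"
proof -
  assume g: "g \<in> kothe X"
  have "integrable lebesgue (\<lambda>x. c * (f x * g x))" if "f \<in> X" for f
    using kothe_D(1)[OF g that] by (rule integrable_mult_right)
  then show ?thesis using g unfolding kothe_def by (auto simp: mult_ac)
qed

lemma kothe_diff: "g \<in> kothe X \<Longrightarrow> h \<in> kothe X \<Longrightarrow> (\<lambda>x. g x - h x) \<in> kothe X"
  using kothe_add[of g "\<lambda>x. (-1) * h x"] kothe_cmult[of h "-1"] by simp

lemma kothe_zero: "(\<lambda>x. 0) \<in> kothe X" "kothe_norm X N (\<lambda>x. 0) = 0"
proof -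
  have "(\<lambda>x. 0) \<in> kothe X \<and> kothe_norm X N (\<lambda>x. 0) \<le> 0"
    using kn_le[of "\<lambda>x. 0" 0] by simp
  then show "(\<lambda>x. 0) \<in> kothe X" "kothe_norm X N (\<lambda>x. 0) = 0" using kn_nonneg by force+
qed

lemma kn_triangle:
  assumes g: "g \<in> kothe X" and h: "h \<in> kothe X"
  shows "kothe_norm X N (\<lambda>x. g x + h x) \<le> kothe_norm X N g + kothe_norm X N h"
proof -
  have "(\<integral>\<^sup>+x. ennreal \<bar>f x * (g x + h x)\<bar> \<partial>lebesgue)
        \<le> ennreal ((kothe_norm X N g + kothe_norm X N h) * N f)" if f: "f \<in> X" for f
  proof -
    have "(\<integral>\<^sup>+x. ennreal \<bar>f x * (g x + h x)\<bar> \<partial>lebesgue)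
        \<le> (\<integral>\<^sup>+x. ennreal \<bar>f x * g x\<bar> + ennreal \<bar>f x * h x\<bar> \<partial>lebesgue)"
    proof (intro nn_integral_mono)
      fix x
      have "\<bar>f x * (g x + h x)\<bar> \<le> \<bar>f x * g x\<bar> + \<bar>f x * h x\<bar>"
        by (metis abs_triangle_ineq distrib_left)
      then have "ennreal \<bar>f x * (g x + h x)\<bar> \<le> ennreal (\<bar>f x * g x\<bar> + \<bar>f x * h x\<bar>)"
        by (rule ennreal_leI)
      also have "\<dots> = ennreal \<bar>f x * g x\<bar> + ennreal \<bar>f x * h x\<bar>" by (rule ennreal_plus) auto
      finally show "ennreal \<bar>f x * (g x + h x)\<bar> \<le> ennreal \<bar>f x * g x\<bar> + ennreal \<bar>f x * h x\<bar>" .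
    qed
    also have "\<dots> = (\<integral>\<^sup>+x. ennreal \<bar>f x * g x\<bar> \<partial>lebesgue) + (\<integral>\<^sup>+x. ennreal \<bar>f x * h x\<bar> \<partial>lebesgue)"
      using meas[OF f] kothe_meas[OF g] kothe_meas[OF h] by (intro nn_integral_add) auto
    also have "\<dots> \<le> ennreal (N f * kothe_norm X N g) + ennreal (N f * kothe_norm X N h)"
      by (intro add_mono holder_nn f g h)
    also have "\<dots> = ennreal ((kothe_norm X N g + kothe_norm X N h) * N f)"
      using qn_facts(5)[OF qn f] kn_nonneg[OF g] kn_nonneg[OF h]
      by (subst ennreal_plus[symmetric]) (auto simp: algebra_simps)
    finally show ?thesis .
  qed
  then show ?thesis using kn_le(2)[of "\<lambda>x. g x + h x"] kothe_meas[OF g] kothe_meas[OF h]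
      kn_nonneg[OF g] kn_nonneg[OF h] by simp
qed

lemma kn_cmult_le:
  assumes g: "g \<in> kothe X"
  shows "kothe_norm X N (\<lambda>x. c * g x) \<le> \<bar>c\<bar> * kothe_norm X N g"
proof -
  have "(\<integral>\<^sup>+x. ennreal \<bar>f x * (c * g x)\<bar> \<partial>lebesgue) \<le> ennreal ((\<bar>c\<bar> * kothe_norm X N g) * N f)"
    if f: "f \<in> X" for f
  proof -
    have "(\<integral>\<^sup>+x. ennreal \<bar>f x * (c * g x)\<bar> \<partial>lebesgue) = (\<integral>\<^sup>+x. ennreal \<bar>c\<bar> * ennreal \<bar>f x * g x\<bar> \<partial>lebesgue)"
      by (intro nn_integral_cong) (auto simp: abs_mult ennreal_mult[symmetric] mult_ac)
    also have "\<dots> = ennreal \<bar>c\<bar> * (\<integral>\<^sup>+x. ennreal \<bar>f x * g x\<bar> \<partial>lebesgue)"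
      using meas[OF f] kothe_meas[OF g] by (intro nn_integral_cmult) auto
    also have "\<dots> \<le> ennreal \<bar>c\<bar> * ennreal (N f * kothe_norm X N g)"
      by (intro mult_left_mono holder_nn f g) auto
    also have "\<dots> = ennreal (\<bar>c\<bar> * (N f * kothe_norm X N g))"
      by (rule ennreal_mult[symmetric]) (use qn_facts(5)[OF qn f] kn_nonneg[OF g] in auto)
    also have "\<dots> = ennreal ((\<bar>c\<bar> * kothe_norm X N g) * N f)" by (simp add: mult_ac)
    finally show ?thesis .
  qed
  then show ?thesis using kn_le(2)[of "\<lambda>x. c * g x" "\<bar>c\<bar> * kothe_norm X N g"] kothe_meas[OF g]
      kn_nonneg[OF g] by simp
qed

lemma kn_cmult:
  assumes g: "g \<in> kothe X"
  shows "kothe_norm X N (\<lambda>x. c * g x) = \<bar>c\<bar> * kothe_norm X N g"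
proof (cases "c = 0")
  case True then show ?thesis using kothe_zero by simp
next
  case False
  have "(\<lambda>x. inverse c * (c * g x)) = g" using False by (intro ext) (simp add: field_simps)
  then have "kothe_norm X N g = kothe_norm X N (\<lambda>x. inverse c * (c * g x))" by simp
  also have "\<dots> \<le> \<bar>inverse c\<bar> * kothe_norm X N (\<lambda>x. c * g x)"
    by (rule kn_cmult_le[OF kothe_cmult[OF g]])
  finally have "\<bar>c\<bar> * kothe_norm X N g \<le> kothe_norm X N (\<lambda>x. c * g x)"
    using False by (simp add: field_simps abs_inverse)
  then show ?thesis using kn_cmult_le[OF g, of c] by simp
qed

lemma kn_zero_iff:
  assumes g: "g \<in> kothe X"
  shows "kothe_norm X N g = 0 \<longleftrightarrow> (AE x in lebesgue. g x = 0)"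
proof
  assume AE: "AE x in lebesgue. g x = 0"
  have "(\<integral>\<^sup>+x. ennreal \<bar>f x * g x\<bar> \<partial>lebesgue) \<le> ennreal (0 * N f)" for f
  proof -
    have "AE x in lebesgue. ennreal \<bar>f x * g x\<bar> = 0" using AE by eventually_elim simp
    then have "(\<integral>\<^sup>+x. ennreal \<bar>f x * g x\<bar> \<partial>lebesgue) = (\<integral>\<^sup>+x. 0 \<partial>(lebesgue :: 'a measure))"
      by (rule nn_integral_cong_AE)
    then show ?thesis by simp
  qed
  then show "kothe_norm X N g = 0" using kn_le(2)[of g 0] kothe_meas[OF g] kn_nonneg[OF g] by simp
next
  assume kn0: "kothe_norm X N g = 0"
  show "AE x in lebesgue. g x = 0"
  proof (rule ccontr)
    assume nAE: "\<not> (AE x in lebesgue. g x = 0)"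
    define E where "E = {x. g x \<noteq> 0}"
    have gm[measurable]: "g \<in> borel_measurable lebesgue" using kothe_meas[OF g] .
    have "{x\<in>space lebesgue. g x \<noteq> 0} \<in> sets lebesgue" by measurable
    then have Em: "E \<in> sets lebesgue" unfolding E_def by simp
    have "emeasure lebesgue E \<noteq> 0"
    proof
      assume "emeasure lebesgue E = 0"
      then have "AE x in lebesgue. x \<notin> E" using Em by (simp add: AE_iff_measurable[OF _ refl])
      then show False using nAE unfolding E_def by (auto elim!: eventually_mono)
    qed
    then obtain F where F: "F \<in> sets lebesgue" "F \<subseteq> E" "emeasure lebesgue F > 0" "indicator F \<in> X"
      using sat_D[OF Em] by (auto simp: zero_less_iff_neq_zero)
    have "(\<integral>\<^sup>+x. ennreal \<bar>indicator F x * g x\<bar> \<partial>lebesgue) \<le> ennreal (N (indicator F) * 0)"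
      using holder_nn[OF F(4) g] kn0 by simp
    then have "(\<integral>\<^sup>+x. ennreal \<bar>indicator F x * g x\<bar> \<partial>lebesgue) = 0" by simp
    then have "AE x in lebesgue. ennreal \<bar>indicator F x * g x\<bar> = 0"
      using F(1) kothe_meas[OF g] by (subst nn_integral_0_iff_AE[symmetric]) auto
    then have "AE x in lebesgue. x \<notin> F"
      using F(2) unfolding E_def by (auto elim!: eventually_mono simp: indicator_def split: if_splits)
    then have "emeasure lebesgue F = 0" using F(1) by (simp add: AE_iff_measurable[OF _ refl])
    then show False using F(3) by simp
  qed
qed

lemma kothe_ideal: "ideal_property (kothe X) (kothe_norm X N)"
  unfolding ideal_property_def
proof (intro ballI impI conjI)
  fix g h assume g: "g \<in> kothe X" and hm: "h \<in> borel_measurable lebesgue"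
    and le: "AE x in lebesgue. \<bar>h x\<bar> \<le> \<bar>g x\<bar>"
  have bd: "(\<integral>\<^sup>+x. ennreal \<bar>f x * h x\<bar> \<partial>lebesgue) \<le> ennreal (kothe_norm X N g * N f)" if f: "f \<in> X" for f
  proof -
    have "(\<integral>\<^sup>+x. ennreal \<bar>f x * h x\<bar> \<partial>lebesgue) \<le> (\<integral>\<^sup>+x. ennreal \<bar>f x * g x\<bar> \<partial>lebesgue)"
    proof (rule nn_integral_mono_AE)
      show "AE x in lebesgue. ennreal \<bar>f x * h x\<bar> \<le> ennreal \<bar>f x * g x\<bar>"
        using le by eventually_elim (auto simp: abs_mult intro!: ennreal_leI mult_left_mono)
    qed
    also have "\<dots> \<le> ennreal (kothe_norm X N g * N f)" using holder_nn[OF f g] by (simp add: mult_ac)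
    finally show ?thesis .
  qed
  show "h \<in> kothe X" using kn_le(1)[OF hm kn_nonneg[OF g] bd] .
  show "kothe_norm X N h \<le> kothe_norm X N g" using kn_le(2)[OF hm kn_nonneg[OF g] bd] .
qed

lemma kothe_qn: "quasi_normed_space (kothe X) (kothe_norm X N)"
proof -
  have K: "\<exists>K\<ge>1. \<forall>f\<in>kothe X. \<forall>g\<in>kothe X. kothe_norm X N (\<lambda>x. f x + g x) \<le> K * (kothe_norm X N f + kothe_norm X N g)"
    by (rule exI[of _ 1]) (simp add: kn_triangle)
  have a: "kothe X \<subseteq> borel_measurable lebesgue" using kothe_meas by blast
  have b: "\<forall>f\<in>kothe X. \<forall>g\<in>kothe X. (\<lambda>x. f x + g x) \<in> kothe X" using kothe_add by blast
  have c: "\<forall>c. \<forall>f\<in>kothe X. (\<lambda>x. c * f x) \<in> kothe X" using kothe_cmult by blast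
  have d: "\<forall>f\<in>kothe X. 0 \<le> kothe_norm X N f" using kn_nonneg by blast
  have e: "\<forall>f\<in>kothe X. kothe_norm X N f = 0 \<longleftrightarrow> (AE x in lebesgue. f x = 0)" using kn_zero_iff by blast
  have f: "\<forall>c. \<forall>f\<in>kothe X. kothe_norm X N (\<lambda>x. c * f x) = \<bar>c\<bar> * kothe_norm X N f" using kn_cmult by blast
  show ?thesis unfolding quasi_normed_space_def using K a b c d e f kothe_zero(1) by blast
qed

end


context qbfs
begin

lemma kothe_complete: "complete_qn (kothe X) (kothe_norm X N)"
  unfolding complete_qn_def
proof (intro allI impI)
  fix u :: "nat \<Rightarrow> 'a \<Rightarrow> real" assume asm: "(\<forall>n. u n \<in> kothe X) \<and> (\<forall>e>0. \<exists>M. \<forall>m\<ge>M. \<forall>n\<ge>M. kothe_norm X N (\<lambda>x. u m x - u n x) < e)"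
  then have u: "\<And>n. u n \<in> kothe X" by blast
  have um[measurable]: "\<And>n. u n \<in> borel_measurable lebesgue" using kothe_meas[OF u] .
  have "\<forall>k::nat. \<exists>M. \<forall>m\<ge>M. \<forall>n\<ge>M. kothe_norm X N (\<lambda>x. u m x - u n x) < (1/2)^k"
    using asm by simp
  then obtain M :: "nat \<Rightarrow> nat" where M': "\<forall>k. \<forall>m\<ge>M k. \<forall>n\<ge>M k. kothe_norm X N (\<lambda>x. u m x - u n x) < (1/2)^k"
    using choice[of "\<lambda>k M. \<forall>m\<ge>M. \<forall>n\<ge>M. kothe_norm X N (\<lambda>x. u m x - u n x) < (1/2)^k"] by blast
  have M: "\<And>k m n. m \<ge> M k \<Longrightarrow> n \<ge> M k \<Longrightarrow> kothe_norm X N (\<lambda>x. u m x - u n x) < (1/2)^k"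
    using M' by blast
  define \<phi> where "\<phi> k = Max (M ` {..k})" for k
  have phiM: "M k \<le> \<phi> k" for k unfolding \<phi>_def by (intro Max_ge) auto
  have phimono: "\<phi> k \<le> \<phi> k'" if "k \<le> k'" for k k'
    unfolding \<phi>_def using that by (intro Max_mono) auto
  define d where "d k = (\<lambda>x. u (\<phi> (Suc k)) x - u (\<phi> k) x)" for k
  have dK: "d k \<in> kothe X" for k unfolding d_def by (intro kothe_diff u)
  have dm[measurable]: "d k \<in> borel_measurable lebesgue" for k unfolding d_def by measurable
  have dN: "kothe_norm X N (d k) \<le> (1/2)^k" for k
  proof -
    have "\<phi> (Suc k) \<ge> M k" using phiM[of k] phimono[of k "Suc k"] by simp
    then show ?thesis unfolding d_def using M[of k "\<phi> (Suc k)" "\<phi> k"] phiM[of k] by simp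
  qed
  define G where "G j x = (\<Sum>k. ennreal \<bar>d (k + j) x\<bar>)" for j x
  have Gm[measurable]: "(\<lambda>x. G j x) \<in> borel_measurable lebesgue" for j unfolding G_def by measurable
  have Gint: "(\<integral>\<^sup>+x. ennreal \<bar>f x\<bar> * G j x \<partial>lebesgue) \<le> ennreal (N f * 2 * (1/2)^j)" if f: "f \<in> X" for f j
  proof -
    have fm[measurable]: "f \<in> borel_measurable lebesgue" using meas[OF f] .
    have "(\<integral>\<^sup>+x. ennreal \<bar>f x\<bar> * G j x \<partial>lebesgue) = (\<integral>\<^sup>+x. (\<Sum>k. ennreal \<bar>f x * d (k + j) x\<bar>) \<partial>lebesgue)"
    proof (intro nn_integral_cong)
      fix x
      have "ennreal \<bar>f x\<bar> * G j x = (\<Sum>k. ennreal \<bar>f x\<bar> * ennreal \<bar>d (k + j) x\<bar>)"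
        unfolding G_def by (rule ennreal_suminf_cmult[symmetric])
      also have "\<dots> = (\<Sum>k. ennreal \<bar>f x * d (k + j) x\<bar>)"
      proof (rule suminf_cong)
        fix k show "ennreal \<bar>f x\<bar> * ennreal \<bar>d (k + j) x\<bar> = ennreal \<bar>f x * d (k + j) x\<bar>"
          unfolding abs_mult by (rule ennreal_mult[symmetric]) auto
      qed
      finally show "ennreal \<bar>f x\<bar> * G j x = (\<Sum>k. ennreal \<bar>f x * d (k + j) x\<bar>)" .
    qed
    also have "\<dots> = (\<Sum>k. (\<integral>\<^sup>+x. ennreal \<bar>f x * d (k + j) x\<bar> \<partial>lebesgue))"
      by (rule nn_integral_suminf) measurable
    also have "\<dots> \<le> (\<Sum>k. ennreal (N f * (1/2)^(k+j)))"
    proof (intro suminf_le)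
      fix k
      have "(\<integral>\<^sup>+x. ennreal \<bar>f x * d (k + j) x\<bar> \<partial>lebesgue) \<le> ennreal (N f * kothe_norm X N (d (k+j)))"
        by (rule holder_nn[OF f dK])
      also have "\<dots> \<le> ennreal (N f * (1/2)^(k+j))"
        by (intro ennreal_leI mult_left_mono dN qn_facts(5)[OF qn f])
      finally show "(\<integral>\<^sup>+x. ennreal \<bar>f x * d (k + j) x\<bar> \<partial>lebesgue) \<le> ennreal (N f * (1/2)^(k+j))" .
    qed auto
    also have "\<dots> = ennreal (N f * 2 * (1/2)^j)" by (rule geom_tail_ennreal[OF qn_facts(5)[OF qn f]])
    finally show ?thesis .
  qed
  have Gfin: "AE x in lebesgue. G 0 x \<noteq> \<infinity>"
  proof -
    define B where "B = {x\<in>space lebesgue. G 0 x = \<infinity>}"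
    have Bm: "B \<in> sets lebesgue" unfolding B_def by measurable
    have "emeasure lebesgue B = 0"
    proof (rule ccontr)
      assume "emeasure lebesgue B \<noteq> 0"
      then obtain F where F: "F \<in> sets lebesgue" "F \<subseteq> B" "emeasure lebesgue F > 0" "indicator F \<in> X"
        using sat_D[OF Bm] by (auto simp: zero_less_iff_neq_zero)
      have "(\<integral>\<^sup>+x. ennreal \<bar>indicator F x\<bar> * G 0 x \<partial>lebesgue) = (\<integral>\<^sup>+x. \<infinity> * indicator F x \<partial>lebesgue)"
      proof (intro nn_integral_cong)
        fix x show "ennreal \<bar>indicator F x\<bar> * G 0 x = \<infinity> * indicator F x"
          using F(2) unfolding B_def by (cases "x \<in> F") auto
      qed
      also have "\<dots> = \<infinity> * emeasure lebesgue F" using F(1) by (rule nn_integral_cmult_indicator)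
      also have "\<dots> = \<infinity>" using F(3) by (simp add: ennreal_mult_eq_top_iff)
      finally have "(\<integral>\<^sup>+x. ennreal \<bar>indicator F x\<bar> * G 0 x \<partial>lebesgue) = \<infinity>" .
      then show False using Gint[OF F(4), of 0] by (simp add: top_unique)
    qed
    then have "AE x in lebesgue. x \<notin> B" using Bm by (simp add: AE_iff_measurable[OF _ refl])
    then show ?thesis unfolding B_def by eventually_elim auto
  qed
  have summ: "summable (\<lambda>k. \<bar>d k x\<bar>)" if "G 0 x \<noteq> \<infinity>" for x
    using that unfolding G_def by (intro summable_suminf_not_top) auto
  define g where "g x = u (\<phi> 0) x + (\<Sum>k. d k x)" for x
  have gm[measurable]: "g \<in> borel_measurable lebesgue" unfolding g_def by measurable
  have tele: "u (\<phi> k) x = u (\<phi> 0) x + (\<Sum>j<k. d j x)" for k x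
    unfolding d_def by (subst sum_lessThan_telescope) simp
  have pw: "ennreal \<bar>g x - u (\<phi> k) x\<bar> \<le> G k x" if "G 0 x \<noteq> \<infinity>" for k x
  proof -
    have s: "summable (\<lambda>j. \<bar>d j x\<bar>)" using summ[OF that] .
    have s2: "summable (\<lambda>j. d j x)" using summable_rabs_cancel[OF s] .
    have "g x - u (\<phi> k) x = (\<Sum>j. d (j + k) x)"
      unfolding g_def tele[of k x] using suminf_split_initial_segment[OF s2, of k] by simp
    have s3: "summable (\<lambda>j. \<bar>d (j + k) x\<bar>)" using summable_iff_shift[of "\<lambda>n. \<bar>d n x\<bar>" k] s by simp
    then have "\<bar>g x - u (\<phi> k) x\<bar> \<le> (\<Sum>j. \<bar>d (j + k) x\<bar>)"
      using summable_rabs[of "\<lambda>j. d (j + k) x"] \<open>g x - u (\<phi> k) x = (\<Sum>j. d (j + k) x)\<close> by simp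
    then have "ennreal \<bar>g x - u (\<phi> k) x\<bar> \<le> ennreal (\<Sum>j. \<bar>d (j + k) x\<bar>)" by (rule ennreal_leI)
    also have "\<dots> = G k x" unfolding G_def
      by (rule suminf_ennreal2[symmetric]) (use s3 in auto)
    finally show ?thesis .
  qed
  have hK: "(\<lambda>x. g x - u (\<phi> k) x) \<in> kothe X \<and> kothe_norm X N (\<lambda>x. g x - u (\<phi> k) x) \<le> 2 * (1/2)^k" for k
  proof -
    have bd: "(\<integral>\<^sup>+x. ennreal \<bar>f x * (g x - u (\<phi> k) x)\<bar> \<partial>lebesgue) \<le> ennreal (2 * (1/2)^k * N f)"
      if f: "f \<in> X" for f
    proof -
      have "(\<integral>\<^sup>+x. ennreal \<bar>f x * (g x - u (\<phi> k) x)\<bar> \<partial>lebesgue) \<le> (\<integral>\<^sup>+x. ennreal \<bar>f x\<bar> * G k x \<partial>lebesgue)"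
      proof (rule nn_integral_mono_AE)
        show "AE x in lebesgue. ennreal \<bar>f x * (g x - u (\<phi> k) x)\<bar> \<le> ennreal \<bar>f x\<bar> * G k x"
          using Gfin
        proof eventually_elim
          case (elim x)
          have "ennreal \<bar>f x * (g x - u (\<phi> k) x)\<bar> = ennreal \<bar>f x\<bar> * ennreal \<bar>g x - u (\<phi> k) x\<bar>"
            by (simp add: abs_mult ennreal_mult)
          also have "\<dots> \<le> ennreal \<bar>f x\<bar> * G k x" by (intro mult_left_mono pw elim) auto
          finally show ?case .
        qed
      qed
      also have "\<dots> \<le> ennreal (N f * 2 * (1/2)^k)" by (rule Gint[OF f])
      finally show ?thesis by (simp add: mult_ac)
    qed
    have hm: "(\<lambda>x. g x - u (\<phi> k) x) \<in> borel_measurable lebesgue" by measurable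
    show ?thesis using kn_le[OF hm _ bd] by simp
  qed
  have gK: "g \<in> kothe X"
  proof -
    have "(\<lambda>x. (g x - u (\<phi> 0) x) + u (\<phi> 0) x) \<in> kothe X" using hK[of 0] u by (intro kothe_add) auto
    then show ?thesis by simp
  qed
  have hN: "kothe_norm X N (\<lambda>x. u (\<phi> k) x - g x) \<le> 2 * (1/2)^k" for k
  proof -
    have "kothe_norm X N (\<lambda>x. (-1) * (g x - u (\<phi> k) x)) = kothe_norm X N (\<lambda>x. g x - u (\<phi> k) x)"
      using kn_cmult[of "\<lambda>x. g x - u (\<phi> k) x" "-1"] hK[of k] by simp
    moreover have "(\<lambda>x. (-1) * (g x - u (\<phi> k) x)) = (\<lambda>x. u (\<phi> k) x - g x)" by auto
    ultimately show ?thesis using hK[of k] by simp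
  qed
  have bnd: "kothe_norm X N (\<lambda>x. u n x - g x) \<le> 3 * (1/2)^k" if n: "n \<ge> \<phi> k" for n k
  proof -
    have "(\<lambda>x. u n x - g x) = (\<lambda>x. (u n x - u (\<phi> k) x) + (u (\<phi> k) x - g x))" by auto
    then have "kothe_norm X N (\<lambda>x. u n x - g x)
        \<le> kothe_norm X N (\<lambda>x. u n x - u (\<phi> k) x) + kothe_norm X N (\<lambda>x. u (\<phi> k) x - g x)"
      using kn_triangle[OF kothe_diff[OF u u] kothe_diff[OF u gK], of n "\<phi> k" "\<phi> k"] by simp
    also have "\<dots> \<le> (1/2)^k + 2 * (1/2)^k"
      using M[of k n "\<phi> k"] n phiM[of k] hN[of k] by (intro add_mono) auto
    finally show ?thesis by simp
  qed
  have "(\<lambda>n. kothe_norm X N (\<lambda>x. u n x - g x)) \<longlonglongrightarrow> 0"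
  proof (rule LIMSEQ_I)
    fix r :: real assume r: "0 < r"
    obtain k where k: "(1/2::real)^k < r / 3" using real_arch_pow_inv[of "r/3" "1/2"] r by auto
    have "norm (kothe_norm X N (\<lambda>x. u n x - g x) - 0) < r" if "n \<ge> \<phi> k" for n
      using bnd[OF that] kn_nonneg[OF kothe_diff[OF u gK]] k by simp
    then show "\<exists>no. \<forall>n\<ge>no. norm (kothe_norm X N (\<lambda>x. u n x - g x) - 0) < r" by blast
  qed
  then show "\<exists>f\<in>kothe X. (\<lambda>n. kothe_norm X N (\<lambda>x. u n x - f x)) \<longlonglongrightarrow> 0" using gK by blast
qed

end


lemma cube_borel:
  fixes a :: "'a::euclidean_space"
  shows "{x. \<forall>i\<in>Basis. a \<bullet> i \<le> x \<bullet> i \<and> x \<bullet> i < a \<bullet> i + r} \<in> sets lborel"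
proof -
  have "{x\<in>space lborel. \<forall>i\<in>Basis. a \<bullet> i \<le> x \<bullet> i \<and> x \<bullet> i < a \<bullet> i + r} \<in> sets lborel"
    by measurable
  then show ?thesis by simp
qed

lemma cube_props:
  assumes "cube (Q :: 'a::euclidean_space set)"
  shows "Q \<in> sets lebesgue" "emeasure lebesgue Q > 0" "emeasure lebesgue Q < \<infinity>"
    "Q \<in> sets lborel" "emeasure lebesgue Q = emeasure lborel Q"
proof -
  obtain a r where r: "r > 0" and Q: "Q = {x. \<forall>i\<in>Basis. a \<bullet> i \<le> x \<bullet> i \<and> x \<bullet> i < a \<bullet> i + r}"
    using assms unfolding cube_def by blast
  show QB: "Q \<in> sets lborel" unfolding Q by (rule cube_borel)
  then show QL: "Q \<in> sets lebesgue" by (simp add: sets_completionI_sets)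
  show eq: "emeasure lebesgue Q = emeasure lborel Q" using QB by (simp add: emeasure_completion main_part_sets)
  define b where "b = a + r *\<^sub>R One"
  have sub1: "box a b \<subseteq> Q" unfolding Q b_def by (fastforce simp: mem_box inner_simps intro: less_imp_le)
  have sub2: "Q \<subseteq> cbox a b" unfolding Q b_def by (auto simp: mem_box inner_simps less_imp_le)
  have "emeasure lborel (box a b) = (\<Prod>i\<in>Basis. (b - a) \<bullet> i)"
    unfolding b_def using r by (intro emeasure_lborel_box) (auto simp: inner_simps)
  also have "\<dots> = (\<Prod>i\<in>(Basis::'a set). ennreal r)" unfolding b_def using r by (simp add: inner_simps ennreal_power)
  also have "\<dots> = ennreal (r ^ DIM('a))" using r by (simp add: ennreal_power)
  finally have "emeasure lborel (box a b) > 0" using r by simp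
  moreover have "emeasure lborel (box a b) \<le> emeasure lborel Q" using sub1 QB by (intro emeasure_mono) auto
  ultimately show "emeasure lebesgue Q > 0" using eq by simp
  have "emeasure lborel Q \<le> emeasure lborel (cbox a b)" using sub2 by (intro emeasure_mono) auto
  then show "emeasure lebesgue Q < \<infinity>" using eq emeasure_lborel_cbox_finite[of a b] by simp
qed

lemma ball_in_cube:
  fixes n :: real
  assumes "n > 0"
  shows "\<exists>Q. cube Q \<and> ball (0::'a::euclidean_space) n \<subseteq> Q"
proof -
  define a :: 'a where "a = (- n) *\<^sub>R One"
  have "cube {x. \<forall>i\<in>Basis. a \<bullet> i \<le> x \<bullet> i \<and> x \<bullet> i < a \<bullet> i + 2 * n}"
    unfolding cube_def using assms by (intro exI[of _ a] exI[of _ "2*n"]) auto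
  moreover have "ball 0 n \<subseteq> {x. \<forall>i\<in>Basis. a \<bullet> i \<le> x \<bullet> i \<and> x \<bullet> i < a \<bullet> i + 2 * n}"
  proof
    fix x :: 'a assume "x \<in> ball 0 n"
    then have nx: "norm x < n" by simp
    have "\<bar>x \<bullet> i\<bar> < n" if "i \<in> Basis" for i using Basis_le_norm[OF that, of x] nx by simp
    then show "x \<in> {x. \<forall>i\<in>Basis. a \<bullet> i \<le> x \<bullet> i \<and> x \<bullet> i < a \<bullet> i + 2 * n}"
      unfolding a_def by (force simp: inner_simps abs_less_iff)
  qed
  ultimately show ?thesis by blast
qed

lemma pos_meas_in_cube:
  assumes E: "E \<in> sets lebesgue" "emeasure lebesgue E > 0"
  shows "\<exists>Q. cube (Q::'a::euclidean_space set) \<and> emeasure lebesgue (E \<inter> Q) > 0"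
proof (rule ccontr)
  assume "\<not> ?thesis"
  then have z: "emeasure lebesgue (E \<inter> Q) = 0" if "cube Q" for Q :: "'a set" using that by (auto simp: zero_less_iff_neq_zero)
  have "emeasure lebesgue (\<Union>n::nat. E \<inter> ball 0 (Suc n)) = 0"
  proof (rule emeasure_UN_eq_0)
    fix n :: nat
    obtain Q where Q: "cube Q" "ball (0::'a) (Suc n) \<subseteq> Q" using ball_in_cube[of "real (Suc n)"] by auto
    have "emeasure lebesgue (E \<inter> ball 0 (Suc n)) \<le> emeasure lebesgue (E \<inter> Q)"
      using Q cube_props(1)[OF Q(1)] E(1) by (intro emeasure_mono) auto
    then show "emeasure lebesgue (E \<inter> ball 0 (Suc n)) = 0" using z[OF Q(1)] by simp
  next
    show "range (\<lambda>n::nat. E \<inter> ball 0 (Suc n)) \<subseteq> sets lebesgue" using E(1) by auto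
  qed
  moreover have "(\<Union>n::nat. E \<inter> ball (0::'a) (Suc n)) = E"
  proof
    show "(\<Union>n::nat. E \<inter> ball (0::'a) (Suc n)) \<subseteq> E" by auto
    show "E \<subseteq> (\<Union>n::nat. E \<inter> ball (0::'a) (Suc n))"
    proof
      fix x :: 'a assume x: "x \<in> E"
      obtain n :: nat where "norm x < n" using reals_Archimedean2 by blast
      then have "x \<in> E \<inter> ball 0 (Suc n)" using x by auto
      then show "x \<in> (\<Union>n::nat. E \<inter> ball (0::'a) (Suc n))" by blast
    qed
  qed
  ultimately show False using E(2) by simp
qed

context qbfs
begin

lemma kothe_sat:
  assumes cubes: "\<And>Q. cube Q \<Longrightarrow> indicator Q \<in> kothe X"
  shows "saturation_property (kothe X)"
  unfolding saturation_property_def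
proof (intro ballI impI)
  fix E :: "'a set" assume E: "E \<in> sets lebesgue" "emeasure lebesgue E > 0"
  obtain Q where Q: "cube Q" "emeasure lebesgue (E \<inter> Q) > 0" using pos_meas_in_cube[OF E] by blast
  have m: "E \<inter> Q \<in> sets lebesgue" using E(1) cube_props(1)[OF Q(1)] by auto
  have "indicator (E \<inter> Q) \<in> kothe X"
  proof (rule ideal_D(1)[OF kothe_ideal cubes[OF Q(1)]])
    show "indicator (E \<inter> Q) \<in> borel_measurable lebesgue" using m by (simp add: borel_measurable_indicator)
    show "AE x in lebesgue. \<bar>indicator (E \<inter> Q) x :: real\<bar> \<le> \<bar>indicator Q x\<bar>"
      by (intro AE_I2) (auto simp: indicator_def)
  qed
  then show "\<exists>F\<in>sets lebesgue. F \<subseteq> E \<and> 0 < emeasure lebesgue F \<and> indicator F \<in> kothe X"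
    using m Q(2) by (intro bexI[of _ "E \<inter> Q"]) auto
qed

lemma kothe_BFS:
  assumes cubes: "\<And>Q. cube Q \<Longrightarrow> indicator Q \<in> kothe X"
  shows "BFS (kothe X) (kothe_norm X N)"
  unfolding BFS_def quasi_BFS_def
  using kothe_qn kothe_complete kothe_ideal kothe_sat[OF cubes] kn_triangle by blast

end


lemma summ_enn: "(f::'b\<Rightarrow>ennreal) summable_on A" by (rule nonneg_summable_on_complete) simp
lemma infsum_ennreal_nat: "infsum (f :: nat \<Rightarrow> ennreal) UNIV = suminf f"
proof -
  have "(f has_sum infsum f UNIV) UNIV" by (rule has_sum_infsum[OF summ_enn])
  then have "f sums infsum f UNIV" by (rule has_sum_imp_sums)
  then show ?thesis by (rule sums_unique)
qed

lemma infsum_countable_cases: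
  assumes "countable P"
  shows "finite P \<or> (\<exists>e. bij_betw e (UNIV::nat set) P \<and> (\<forall>h. infsum (h :: _ \<Rightarrow> ennreal) P = (\<Sum>n. h (e n))))"
proof (cases "finite P")
  case False
  define e where "e = from_nat_into P"
  have b: "bij_betw e UNIV P" unfolding e_def using bij_betw_from_nat_into[OF assms False] .
  have "infsum (h :: _ \<Rightarrow> ennreal) P = (\<Sum>n. h (e n))" for h
  proof -
    have "infsum h P = infsum (\<lambda>n. h (e n)) UNIV" using infsum_reindex_bij_betw[OF b, of h] by simp
    also have "\<dots> = (\<Sum>n. h (e n))" by (rule infsum_ennreal_nat)
    finally show ?thesis .
  qed
  then show ?thesis using b by blast
qed simp

lemma infsum_ennreal_multc:
  assumes "countable P"
  shows "(\<Sum>\<^sub>\<infinity>i\<in>P. (F i :: ennreal)) * c = (\<Sum>\<^sub>\<infinity>i\<in>P. F i * c)"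
  using infsum_countable_cases[OF assms]
proof
  assume "finite P" then show ?thesis by (simp add: sum_distrib_right)
next
  assume "\<exists>e. bij_betw e (UNIV::nat set) P \<and> (\<forall>h. infsum (h :: _ \<Rightarrow> ennreal) P = (\<Sum>n. h (e n)))"
  then obtain e where e: "\<And>h. infsum (h :: _ \<Rightarrow> ennreal) P = (\<Sum>n. h (e n))" by blast
  show ?thesis unfolding e by simp
qed

lemma infsum_ennreal_measurable:
  assumes "countable P" "\<And>i. i \<in> P \<Longrightarrow> (F i :: 'a \<Rightarrow> ennreal) \<in> borel_measurable M"
  shows "(\<lambda>x. \<Sum>\<^sub>\<infinity>i\<in>P. F i x) \<in> borel_measurable M"
  using infsum_countable_cases[OF assms(1)]
proof
  assume "finite P" then show ?thesis using assms(2) by simp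
next
  assume "\<exists>e. bij_betw e (UNIV::nat set) P \<and> (\<forall>h. infsum (h :: _ \<Rightarrow> ennreal) P = (\<Sum>n. h (e n)))"
  then obtain e where b: "bij_betw e (UNIV::nat set) P" and e: "\<And>h. infsum (h :: _ \<Rightarrow> ennreal) P = (\<Sum>n. h (e n))" by blast
  have m: "F (e n) \<in> borel_measurable M" for n using assms(2) bij_betwE[OF b] by blast
  show ?thesis unfolding e by (rule borel_measurable_suminf_order) (rule m)
qed

lemma nn_integral_infsum:
  assumes "countable P" "\<And>i. i \<in> P \<Longrightarrow> (F i :: 'a \<Rightarrow> ennreal) \<in> borel_measurable M"
  shows "(\<integral>\<^sup>+x. (\<Sum>\<^sub>\<infinity>i\<in>P. F i x) \<partial>M) = (\<Sum>\<^sub>\<infinity>i\<in>P. (\<integral>\<^sup>+x. F i x \<partial>M))"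
  using infsum_countable_cases[OF assms(1)]
proof
  assume "finite P" then show ?thesis using assms(2) by (simp add: nn_integral_sum)
next
  assume "\<exists>e. bij_betw e (UNIV::nat set) P \<and> (\<forall>h. infsum (h :: _ \<Rightarrow> ennreal) P = (\<Sum>n. h (e n)))"
  then obtain e where b: "bij_betw e (UNIV::nat set) P" and e: "\<And>h. infsum (h :: _ \<Rightarrow> ennreal) P = (\<Sum>n. h (e n))" by blast
  have m: "F (e n) \<in> borel_measurable M" for n using assms(2) bij_betwE[OF b] by blast
  show ?thesis unfolding e by (rule nn_integral_suminf) (rule m)
qed

lemma countable_disjoint_pos:
  fixes E :: "'b \<Rightarrow> 'a::euclidean_space set"
  assumes dj: "disjoint_family_on E P" and m: "\<And>Q. Q \<in> P \<Longrightarrow> E Q \<in> sets lebesgue"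
    and pos: "\<And>Q. Q \<in> P \<Longrightarrow> emeasure lebesgue (E Q) > 0"
  shows "countable P"
proof -
  define B where "B n = ball (0::'a) (real (Suc n))" for n
  define Pn where "Pn n = {Q\<in>P. emeasure lebesgue (E Q \<inter> B n) > ennreal (1 / real (Suc n))}" for n
  have Bm: "B n \<in> sets lebesgue" for n unfolding B_def by simp
  have Bfin: "emeasure lebesgue (B n) < \<infinity>" for n
    unfolding B_def using emeasure_bounded_finite[of "ball (0::'a) (real (Suc n))"] by simp
  have cover: "P \<subseteq> (\<Union>n. Pn n)"
  proof
    fix Q assume Q: "Q \<in> P"
    have "emeasure lebesgue (\<Union>n. E Q \<inter> B n) = emeasure lebesgue (E Q)"
    proof -
      have "(\<Union>n. E Q \<inter> B n) = E Q"
      proof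
        show "(\<Union>n. E Q \<inter> B n) \<subseteq> E Q" by auto
        show "E Q \<subseteq> (\<Union>n. E Q \<inter> B n)"
        proof
          fix x assume x: "x \<in> E Q"
          obtain n :: nat where "norm x < n" using reals_Archimedean2 by blast
          then have "x \<in> E Q \<inter> B n" using x unfolding B_def by auto
          then show "x \<in> (\<Union>n. E Q \<inter> B n)" by blast
        qed
      qed
      then show ?thesis by simp
    qed
    moreover have "(\<lambda>n. emeasure lebesgue (E Q \<inter> B n)) \<longlonglongrightarrow> emeasure lebesgue (\<Union>n. E Q \<inter> B n)"
    proof (rule Lim_emeasure_incseq)
      show "range (\<lambda>n. E Q \<inter> B n) \<subseteq> sets lebesgue" using m[OF Q] Bm by auto
      show "incseq (\<lambda>n. E Q \<inter> B n)" unfolding B_def incseq_def by auto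
    qed
    ultimately have lim: "(\<lambda>n. emeasure lebesgue (E Q \<inter> B n)) \<longlonglongrightarrow> emeasure lebesgue (E Q)" by simp
    obtain dd :: ennreal where dd: "0 < dd" "dd < emeasure lebesgue (E Q)" using dense[OF pos[OF Q]] by blast
    have "eventually (\<lambda>n. emeasure lebesgue (E Q \<inter> B n) > dd) sequentially"
      using lim dd(2) by (rule order_tendstoD)
    moreover have "eventually (\<lambda>n. ennreal (1 / real (Suc n)) < dd) sequentially"
    proof -
      have "(\<lambda>n. ennreal (1 / real (Suc n))) \<longlonglongrightarrow> ennreal 0"
        by (intro tendsto_ennrealI LIMSEQ_Suc[OF lim_inverse_n'])
      then show ?thesis using dd(1) by (intro order_tendstoD) auto
    qed
    ultimately obtain n where "ennreal (1 / real (Suc n)) < emeasure lebesgue (E Q \<inter> B n)"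
      by (metis (no_types, lifting) eventually_conj eventually_sequentially order.strict_trans order_refl)
    then show "Q \<in> (\<Union>n. Pn n)" unfolding Pn_def using Q by blast
  qed
  have fin: "finite (Pn n)" for n
  proof (rule ccontr)
    assume inf: "infinite (Pn n)"
    obtain k :: nat where k: "real k > real (Suc n) * enn2real (emeasure lebesgue (B n))"
      using reals_Archimedean2 by blast
    obtain S where S: "finite S" "card S = k" "S \<subseteq> Pn n" using infinite_arbitrarily_large[OF inf] by blast
    have "(\<Sum>Q\<in>S. emeasure lebesgue (E Q \<inter> B n)) = emeasure lebesgue (\<Union>Q\<in>S. E Q \<inter> B n)"
    proof (rule sum_emeasure)
      show "(\<lambda>Q. E Q \<inter> B n) ` S \<subseteq> sets lebesgue" using S(3) m Bm unfolding Pn_def by auto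
      show "disjoint_family_on (\<lambda>Q. E Q \<inter> B n) S"
        using dj S(3) unfolding Pn_def disjoint_family_on_def by blast
    qed (rule S(1))
    also have "\<dots> \<le> emeasure lebesgue (B n)" using Bm by (intro emeasure_mono) auto
    finally have le: "(\<Sum>Q\<in>S. emeasure lebesgue (E Q \<inter> B n)) \<le> emeasure lebesgue (B n)" .
    have "(\<Sum>Q\<in>S. ennreal (1 / real (Suc n))) \<le> (\<Sum>Q\<in>S. emeasure lebesgue (E Q \<inter> B n))"
      using S(3) unfolding Pn_def by (intro sum_mono less_imp_le) auto
    also note le
    finally have "ennreal (real k / real (Suc n)) \<le> emeasure lebesgue (B n)"
      using S(2) by (simp add: ennreal_of_nat_eq_real_of_nat ennreal_mult[symmetric])
    then have "real k / real (Suc n) \<le> enn2real (emeasure lebesgue (B n))"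
    proof -
      have "enn2real (ennreal (real k / real (Suc n))) \<le> enn2real (emeasure lebesgue (B n))"
        by (rule enn2real_mono[OF \<open>ennreal (real k / real (Suc n)) \<le> emeasure lebesgue (B n)\<close>]) (use Bfin[of n] in simp)
      then show ?thesis by simp
    qed
    then have "real k \<le> real (Suc n) * enn2real (emeasure lebesgue (B n))" by (simp add: field_simps)
    then show False using k by simp
  qed
  have "countable (\<Union>n. Pn n)" using fin by (intro countable_UN) (auto intro: countable_finite)
  then show ?thesis using cover by (rule countable_subset[rotated])
qed



definition good_adm :: "('a::euclidean_space set set \<Rightarrow> bool) \<Rightarrow> bool" where
  "good_adm adm \<longleftrightarrow> (\<forall>P. adm P \<longrightarrow> countable P \<and> P \<subseteq> Collect cube) \<and> (\<forall>Q. cube Q \<longrightarrow> adm {Q})"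

lemma good_adm_disjoint: "good_adm (disjoint_cubes :: 'a::euclidean_space set set \<Rightarrow> bool)"
  unfolding good_adm_def
proof (intro conjI allI impI)
  fix P :: "'a set set" assume P: "disjoint_cubes P"
  then show "P \<subseteq> Collect cube" unfolding disjoint_cubes_def by blast
  show "countable P"
  proof (rule countable_disjoint_pos[of "\<lambda>Q. Q"])
    show "disjoint_family_on (\<lambda>Q. Q) P" using P unfolding disjoint_cubes_def disjoint_family_on_def pairwise_def disjnt_def
      by blast
    show "\<And>Q. Q \<in> P \<Longrightarrow> Q \<in> sets lebesgue" using P cube_props(1) unfolding disjoint_cubes_def by blast
    show "\<And>Q. Q \<in> P \<Longrightarrow> 0 < emeasure lebesgue Q" using P cube_props(2) unfolding disjoint_cubes_def by blast
  qed
next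
  fix Q :: "'a set" assume "cube Q" then show "disjoint_cubes {Q}" unfolding disjoint_cubes_def by simp
qed

lemma good_adm_sparse: "good_adm (sparse :: 'a::euclidean_space set set \<Rightarrow> bool)"
  unfolding good_adm_def
proof (intro conjI allI impI)
  fix P :: "'a set set" assume P: "sparse P"
  then show "P \<subseteq> Collect cube" unfolding sparse_def by blast
  from P obtain E where E: "\<And>Q. Q\<in>P \<Longrightarrow> E Q \<in> sets lebesgue \<and> E Q \<subseteq> Q \<and> measure lebesgue (E Q) \<ge> measure lebesgue Q / 2"
    "disjoint_family_on E P" unfolding sparse_def by blast
  show "countable P"
  proof (rule countable_disjoint_pos[of E])
    show "disjoint_family_on E P" by (rule E(2))
    show "\<And>Q. Q \<in> P \<Longrightarrow> E Q \<in> sets lebesgue" using E(1) by blast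
    show "0 < emeasure lebesgue (E Q)" if Q: "Q \<in> P" for Q
    proof -
      have c: "cube Q" using P Q unfolding sparse_def by blast
      have "measure lebesgue Q > 0" using cube_props(2,3)[OF c] by (simp add: measure_def enn2real_positive_iff)
      then have "measure lebesgue (E Q) > 0" using E(1)[OF Q] by linarith
      then show ?thesis by (simp add: measure_def enn2real_positive_iff)
    qed
  qed
next
  fix Q :: "'a set" assume Q: "cube Q"
  show "sparse {Q}" unfolding sparse_def
    using Q cube_props(1)[OF Q] measure_nonneg[of lebesgue Q]
    by (intro conjI exI[of _ "\<lambda>Q. Q"]) (auto simp: disjoint_family_on_def)
qed

lemma good_admD:
  assumes "good_adm adm"
  shows "\<And>P. adm P \<Longrightarrow> countable P" "\<And>P. adm P \<Longrightarrow> P \<subseteq> Collect cube" "\<And>Q. cube Q \<Longrightarrow> adm {Q}"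
  using assms unfolding good_adm_def by blast+

lemma avg_op_single: "avg_op {Q} f x = avg Q f * indicator Q x"
  unfolding avg_op_def by (simp only: infsum_finite[OF finite.insertI[OF finite.emptyI]] sum.insert_remove[OF finite.emptyI] empty_Diff sum.empty add_0_right)

lemma avg_op_meas:
  assumes "countable P" "P \<subseteq> Collect cube"
  shows "(\<lambda>x. avg_op P f x) \<in> borel_measurable lebesgue"
  unfolding avg_op_def
proof (rule infsum_ennreal_measurable[OF assms(1)])
  fix Q assume "Q \<in> P"
  then have "Q \<in> sets lebesgue" using assms(2) cube_props(1) by blast
  then show "(\<lambda>x. avg Q f * indicator Q x) \<in> borel_measurable lebesgue" by measurable
qed

lemma avg_dual:
  assumes P: "countable P" "P \<subseteq> Collect cube"
    and u[measurable]: "u \<in> borel_measurable lebesgue" and v[measurable]: "v \<in> borel_measurable lebesgue"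
  shows "(\<integral>\<^sup>+x. avg_op P u x * ennreal \<bar>v x\<bar> \<partial>lebesgue)
       = (\<Sum>\<^sub>\<infinity>Q\<in>P. (\<integral>\<^sup>+x\<in>Q. ennreal \<bar>u x\<bar> \<partial>lebesgue) * (\<integral>\<^sup>+x\<in>Q. ennreal \<bar>v x\<bar> \<partial>lebesgue) / emeasure lebesgue Q)"
proof -
  have Qm: "Q \<in> sets lebesgue" if "Q \<in> P" for Q using that P(2) cube_props(1) by blast
  have "(\<integral>\<^sup>+x. avg_op P u x * ennreal \<bar>v x\<bar> \<partial>lebesgue)
      = (\<integral>\<^sup>+x. (\<Sum>\<^sub>\<infinity>Q\<in>P. avg Q u * indicator Q x * ennreal \<bar>v x\<bar>) \<partial>lebesgue)"
    unfolding avg_op_def by (intro nn_integral_cong infsum_ennreal_multc P(1))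
  also have "\<dots> = (\<Sum>\<^sub>\<infinity>Q\<in>P. (\<integral>\<^sup>+x. avg Q u * indicator Q x * ennreal \<bar>v x\<bar> \<partial>lebesgue))"
  proof (rule nn_integral_infsum[OF P(1)])
    fix Q assume "Q \<in> P"
    then have [measurable]: "Q \<in> sets lebesgue" by (rule Qm)
    show "(\<lambda>x. avg Q u * indicator Q x * ennreal \<bar>v x\<bar>) \<in> borel_measurable lebesgue" by measurable
  qed
  also have "\<dots> = (\<Sum>\<^sub>\<infinity>Q\<in>P. (\<integral>\<^sup>+x\<in>Q. ennreal \<bar>u x\<bar> \<partial>lebesgue) * (\<integral>\<^sup>+x\<in>Q. ennreal \<bar>v x\<bar> \<partial>lebesgue) / emeasure lebesgue Q)"
  proof (rule infsum_cong)
    fix Q assume "Q \<in> P"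
    then have [measurable]: "Q \<in> sets lebesgue" by (rule Qm)
    have "(\<integral>\<^sup>+x. avg Q u * indicator Q x * ennreal \<bar>v x\<bar> \<partial>lebesgue)
        = (\<integral>\<^sup>+x. avg Q u * (ennreal \<bar>v x\<bar> * indicator Q x) \<partial>lebesgue)"
      by (intro nn_integral_cong) (simp add: mult_ac)
    also have "\<dots> = avg Q u * (\<integral>\<^sup>+x\<in>Q. ennreal \<bar>v x\<bar> \<partial>lebesgue)"
      by (rule nn_integral_cmult) measurable
    also have "\<dots> = (\<integral>\<^sup>+x\<in>Q. ennreal \<bar>u x\<bar> \<partial>lebesgue) * (\<integral>\<^sup>+x\<in>Q. ennreal \<bar>v x\<bar> \<partial>lebesgue) / emeasure lebesgue Q"
      unfolding avg_def by (simp add: divide_ennreal_def mult_ac)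
    finally show "(\<integral>\<^sup>+x. avg Q u * indicator Q x * ennreal \<bar>v x\<bar> \<partial>lebesgue) =
      (\<integral>\<^sup>+x\<in>Q. ennreal \<bar>u x\<bar> \<partial>lebesgue) * (\<integral>\<^sup>+x\<in>Q. ennreal \<bar>v x\<bar> \<partial>lebesgue) / emeasure lebesgue Q" .
  qed
  finally show ?thesis .
qed

lemma avg_dual_sym:
  assumes P: "countable P" "P \<subseteq> Collect cube"
    and u: "u \<in> borel_measurable lebesgue" and v: "v \<in> borel_measurable lebesgue"
  shows "(\<integral>\<^sup>+x. avg_op P u x * ennreal \<bar>v x\<bar> \<partial>lebesgue) = (\<integral>\<^sup>+x. avg_op P v x * ennreal \<bar>u x\<bar> \<partial>lebesgue)"
  unfolding avg_dual[OF P u v] avg_dual[OF P v u] by (simp add: mult_ac)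

lemma ae_pos_point:
  assumes "AE x in lebesgue. p x" "F \<in> sets lebesgue" "emeasure lebesgue F > 0"
  shows "\<exists>x\<in>F. p x"
proof (rule ccontr)
  assume "\<not> ?thesis"
  then have nx: "\<And>x. x \<in> F \<Longrightarrow> \<not> p x" by blast
  have "AE x in lebesgue. x \<notin> F" using assms(1)
  proof eventually_elim
    case (elim x) then show ?case using nx by blast
  qed
  then have "emeasure lebesgue F = 0" using assms(2) by (simp add: AE_iff_measurable[OF _ refl])
  then show False using assms(3) by simp
qed

context qbfs
begin

lemma avg_C_nonneg:
  assumes ga: "good_adm adm" and ab: "avg_bound adm X N C"
  shows "C \<ge> 0"
proof -
  obtain f where f: "f \<in> X" "N f = 1" using unit_ex by blast
  define Q0 :: "'a set" where "Q0 = {x. \<forall>i\<in>Basis. 0 \<bullet> i \<le> x \<bullet> i \<and> x \<bullet> i < 0 \<bullet> i + 1}"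
  have "cube Q0" unfolding cube_def Q0_def by (intro exI[of _ 0] exI[of _ 1]) simp
  then have "adm {Q0}" by (rule good_admD(3)[OF ga])
  then have "(\<lambda>x. enn2real (avg_op {Q0} f x)) \<in> X \<and> N (\<lambda>x. enn2real (avg_op {Q0} f x)) \<le> C * N f"
    using ab f(1) unfolding avg_bound_def by blast
  then show ?thesis using qn_facts(5)[OF qn] f(2) by force
qed

lemma cubes_from_avg:
  assumes ga: "good_adm adm" and ab: "avg_bound adm X N C" and Q: "cube Q"
  shows "indicator Q \<in> X" "indicator Q \<in> kothe X"
proof -
  have adm: "adm {Q}" by (rule good_admD(3)[OF ga Q])
  have Qm[measurable]: "Q \<in> sets lebesgue" and Qpos: "emeasure lebesgue Q > 0" and Qfin: "emeasure lebesgue Q < \<infinity>"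
    using cube_props[OF Q] by auto
  have abQ: "\<And>f. f \<in> X \<Longrightarrow> (AE x in lebesgue. avg_op {Q} f x < \<infinity>) \<and>
        (\<lambda>x. enn2real (avg_op {Q} f x)) \<in> X"
    using ab adm unfolding avg_bound_def by blast
  obtain F where F: "F \<in> sets lebesgue" "F \<subseteq> Q" "emeasure lebesgue F > 0" "indicator F \<in> X"
    using sat_D[OF Qm Qpos] by blast
  have "(\<integral>\<^sup>+x\<in>Q. ennreal \<bar>indicator F x\<bar> \<partial>lebesgue) = (\<integral>\<^sup>+x. indicator F x \<partial>lebesgue)"
    using F(2) by (intro nn_integral_cong) (auto simp: indicator_def)
  also have "\<dots> = emeasure lebesgue F" using F(1) by simp
  finally have IF: "(\<integral>\<^sup>+x\<in>Q. ennreal \<bar>indicator F x\<bar> \<partial>lebesgue) = emeasure lebesgue F" .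
  have Ffin: "emeasure lebesgue F < \<infinity>" using emeasure_mono[OF F(2) Qm] Qfin by simp
  define c where "c = enn2real (avg Q (indicator F))"
  have avgF: "avg Q (indicator F) = emeasure lebesgue F / emeasure lebesgue Q" unfolding avg_def IF ..
  have d1: "emeasure lebesgue F / emeasure lebesgue Q < top"
  proof -
    have "emeasure lebesgue F / emeasure lebesgue Q \<noteq> top"
      using ennreal_divide_eq_top_iff[of "emeasure lebesgue F" "emeasure lebesgue Q"] Ffin Qpos by auto
    then show ?thesis by (simp add: less_top)
  qed
  have d2: "0 < emeasure lebesgue F / emeasure lebesgue Q"
    using ennreal_zero_less_divide[of "emeasure lebesgue F" "emeasure lebesgue Q"] F(3) Qfin by auto
  have cpos: "c > 0" unfolding c_def avgF using d1 d2 enn2real_positive_iff by blast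
  have "(\<lambda>x. enn2real (avg_op {Q} (indicator F) x)) = (\<lambda>x. c * indicator Q x)"
    unfolding avg_op_single c_def by (intro ext) (simp add: enn2real_mult indicator_def)
  then have "(\<lambda>x. c * indicator Q x) \<in> X" using abQ[OF F(4)] by simp
  then have "(\<lambda>x. inverse c * (c * indicator Q x)) \<in> X" by (rule qn_facts(4)[OF qn])
  moreover have "(\<lambda>x. inverse c * (c * indicator Q x)) = indicator Q" using cpos by (intro ext) simp
  ultimately show "indicator Q \<in> X" by simp
  have "integrable lebesgue (\<lambda>x. f x * indicator Q x)" if f: "f \<in> X" for f
  proof -
    have fm[measurable]: "f \<in> borel_measurable lebesgue" using meas[OF f] .
    obtain x where "x \<in> Q" "avg_op {Q} f x < \<infinity>" using ae_pos_point[OF conjunct1[OF abQ[OF f]] Qm Qpos] by blast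
    then have "avg Q f < \<infinity>" unfolding avg_op_single by simp
    then have af: "(\<integral>\<^sup>+x\<in>Q. ennreal \<bar>f x\<bar> \<partial>lebesgue) / emeasure lebesgue Q \<noteq> top"
      unfolding avg_def by simp
    have fin: "(\<integral>\<^sup>+x\<in>Q. ennreal \<bar>f x\<bar> \<partial>lebesgue) < \<infinity>"
    proof (rule ccontr)
      assume "\<not> (\<integral>\<^sup>+x\<in>Q. ennreal \<bar>f x\<bar> \<partial>lebesgue) < \<infinity>"
      then have "(\<integral>\<^sup>+x\<in>Q. ennreal \<bar>f x\<bar> \<partial>lebesgue) = top" by (metis less_top infinity_ennreal_def)
      then show False using af ennreal_divide_eq_top_iff[of "\<integral>\<^sup>+x\<in>Q. ennreal \<bar>f x\<bar> \<partial>lebesgue" "emeasure lebesgue Q"] Qfin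
        by auto
    qed
    show ?thesis unfolding integrable_iff_bounded
    proof
      show "(\<lambda>x. f x * indicator Q x) \<in> borel_measurable lebesgue" by measurable
      have "(\<integral>\<^sup>+x. ennreal (norm (f x * indicator Q x)) \<partial>lebesgue) = (\<integral>\<^sup>+x\<in>Q. ennreal \<bar>f x\<bar> \<partial>lebesgue)"
        by (intro nn_integral_cong) (auto simp: indicator_def)
      then show "(\<integral>\<^sup>+x. ennreal (norm (f x * indicator Q x)) \<partial>lebesgue) < \<infinity>" using fin by simp
    qed
  qed
  then show "indicator Q \<in> kothe X" unfolding kothe_def by (auto simp: borel_measurable_indicator)
qed

end


lemma ennreal_enn2real_le: "ennreal (enn2real a) \<le> a"
  by (cases "a = top") (auto simp: less_top)

context qbfs
begin

lemma avg_transfer: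
  assumes ga: "good_adm adm" and ab: "avg_bound adm X N C"
  shows "avg_bound adm (kothe X) (kothe_norm X N) C"
  unfolding avg_bound_def
proof (intro allI impI ballI)
  fix P g assume adm: "adm P" and g: "g \<in> kothe X"
  have P: "countable P" "P \<subseteq> Collect cube" using good_admD(1,2)[OF ga adm] by auto
  have C: "C \<ge> 0" by (rule avg_C_nonneg[OF ga ab])
  have gm[measurable]: "g \<in> borel_measurable lebesgue" using kothe_meas[OF g] .
  define A where "A x = avg_op P g x" for x
  have Am[measurable]: "A \<in> borel_measurable lebesgue" unfolding A_def using avg_op_meas[OF P] by simp
  have key: "(\<integral>\<^sup>+x. A x * ennreal \<bar>f x\<bar> \<partial>lebesgue) \<le> ennreal (C * kothe_norm X N g * N f)"
    if f: "f \<in> X" for f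
  proof -
    have fm[measurable]: "f \<in> borel_measurable lebesgue" using meas[OF f] .
    have abf: "(AE x in lebesgue. avg_op P f x < \<infinity>) \<and> (\<lambda>x. enn2real (avg_op P f x)) \<in> X \<and>
        N (\<lambda>x. enn2real (avg_op P f x)) \<le> C * N f"
      using ab adm f unfolding avg_bound_def by blast
    define h where "h x = enn2real (avg_op P f x)" for x
    have hX: "h \<in> X" and hN: "N h \<le> C * N f" using abf unfolding h_def by auto
    have "(\<integral>\<^sup>+x. A x * ennreal \<bar>f x\<bar> \<partial>lebesgue) = (\<integral>\<^sup>+x. avg_op P f x * ennreal \<bar>g x\<bar> \<partial>lebesgue)"
      unfolding A_def by (rule avg_dual_sym[OF P gm fm])
    also have "\<dots> = (\<integral>\<^sup>+x. ennreal \<bar>h x * g x\<bar> \<partial>lebesgue)"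
    proof (rule nn_integral_cong_AE)
      show "AE x in lebesgue. avg_op P f x * ennreal \<bar>g x\<bar> = ennreal \<bar>h x * g x\<bar>"
        using conjunct1[OF abf]
      proof eventually_elim
        case (elim x)
        then have "avg_op P f x = ennreal (h x)" unfolding h_def by simp
        then show ?case by (simp add: abs_mult ennreal_mult h_def)
      qed
    qed
    also have "\<dots> \<le> ennreal (N h * kothe_norm X N g)" by (rule holder_nn[OF hX g])
    also have "\<dots> \<le> ennreal (C * N f * kothe_norm X N g)"
      by (intro ennreal_leI mult_right_mono hN kn_nonneg g)
    finally show ?thesis by (simp add: mult_ac)
  qed
  have Afin: "AE x in lebesgue. A x < \<infinity>"
  proof -
    define B where "B = {x\<in>space lebesgue. A x = \<infinity>}"
    have Bm: "B \<in> sets lebesgue" unfolding B_def by measurable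
    have "emeasure lebesgue B = 0"
    proof (rule ccontr)
      assume "emeasure lebesgue B \<noteq> 0"
      then obtain F where F: "F \<in> sets lebesgue" "F \<subseteq> B" "emeasure lebesgue F > 0" "indicator F \<in> X"
        using sat_D[OF Bm] by (auto simp: zero_less_iff_neq_zero)
      have "(\<integral>\<^sup>+x. A x * ennreal \<bar>indicator F x\<bar> \<partial>lebesgue) = (\<integral>\<^sup>+x. \<infinity> * indicator F x \<partial>lebesgue)"
      proof (intro nn_integral_cong)
        fix x show "A x * ennreal \<bar>indicator F x\<bar> = \<infinity> * indicator F x"
          using F(2) unfolding B_def by (cases "x \<in> F") auto
      qed
      also have "\<dots> = \<infinity> * emeasure lebesgue F" using F(1) by (rule nn_integral_cmult_indicator)
      also have "\<dots> = \<infinity>" using F(3) by (simp add: ennreal_mult_eq_top_iff)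
      finally show False using key[OF F(4)] by (simp add: top_unique)
    qed
    then have "AE x in lebesgue. x \<notin> B" using Bm by (simp add: AE_iff_measurable[OF _ refl])
    then show ?thesis unfolding B_def by eventually_elim (auto simp: less_top)
  qed
  define Ar where "Ar x = enn2real (A x)" for x
  have Arm: "Ar \<in> borel_measurable lebesgue" unfolding Ar_def by measurable
  have bd: "(\<integral>\<^sup>+x. ennreal \<bar>f x * Ar x\<bar> \<partial>lebesgue) \<le> ennreal ((C * kothe_norm X N g) * N f)"
    if f: "f \<in> X" for f
  proof -
    have "(\<integral>\<^sup>+x. ennreal \<bar>f x * Ar x\<bar> \<partial>lebesgue) \<le> (\<integral>\<^sup>+x. A x * ennreal \<bar>f x\<bar> \<partial>lebesgue)"
    proof (rule nn_integral_mono)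
      fix x
      have "ennreal \<bar>f x * Ar x\<bar> = ennreal (enn2real (A x)) * ennreal \<bar>f x\<bar>"
        unfolding Ar_def by (simp add: abs_mult ennreal_mult mult_ac)
      also have "\<dots> \<le> A x * ennreal \<bar>f x\<bar>" by (intro mult_right_mono ennreal_enn2real_le) auto
      finally show "ennreal \<bar>f x * Ar x\<bar> \<le> A x * ennreal \<bar>f x\<bar>" .
    qed
    also have "\<dots> \<le> ennreal (C * kothe_norm X N g * N f)" by (rule key[OF f])
    finally show ?thesis by (simp add: mult_ac)
  qed
  have CK: "C * kothe_norm X N g \<ge> 0" using C kn_nonneg[OF g] by simp
  show "(AE x in lebesgue. avg_op P g x < \<infinity>) \<and>
      (\<lambda>x. enn2real (avg_op P g x)) \<in> kothe X \<and>
      kothe_norm X N (\<lambda>x. enn2real (avg_op P g x)) \<le> C * kothe_norm X N g"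
    using Afin kn_le[OF Arm CK bd] unfolding A_def Ar_def by simp
qed

end


lemma sqi_bound:
  fixes a :: "'a \<Rightarrow> real"
  assumes "integrable M (\<lambda>x. (b x)^2)" "a \<in> borel_measurable M" "\<And>x. (a x)^2 \<le> (b x)^2"
  shows "integrable M (\<lambda>x. (a x)^2)"
  using assms by (intro Bochner_Integration.integrable_bound[OF assms(1)]) (auto simp: abs_le_square_iff)

lemma sqi_add:
  fixes a b :: "'a \<Rightarrow> real"
  assumes ia: "integrable M (\<lambda>x. (a x)^2)" and ib: "integrable M (\<lambda>x. (b x)^2)"
    and am[measurable]: "a \<in> borel_measurable M" and bm[measurable]: "b \<in> borel_measurable M"
  shows "integrable M (\<lambda>x. (a x + b x)^2)"
proof (rule Bochner_Integration.integrable_bound)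
  show "integrable M (\<lambda>x. 2 * (a x)^2 + 2 * (b x)^2)" using Bochner_Integration.integrable_add[OF Bochner_Integration.integrable_mult_right[OF ia, of 2] Bochner_Integration.integrable_mult_right[OF ib, of 2]] by simp
  show "(\<lambda>x. (a x + b x)^2) \<in> borel_measurable M" by measurable
  show "AE x in M. norm ((a x + b x)^2) \<le> norm (2 * (a x)^2 + 2 * (b x)^2)"
  proof (intro AE_I2)
    fix x have "0 \<le> (a x - b x)^2" by simp
    moreover have "(a x + b x)^2 + (a x - b x)^2 = 2 * (a x)^2 + 2 * (b x)^2" by (simp add: power2_eq_square algebra_simps)
    ultimately have "(a x + b x)^2 \<le> 2 * (a x)^2 + 2 * (b x)^2" by linarith
    moreover have "0 \<le> (a x + b x)^2" by simp
    ultimately show "norm ((a x + b x)^2) \<le> norm (2 * (a x)^2 + 2 * (b x)^2)" by simp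
  qed
qed

lemma sqi_cmult:
  fixes a :: "'a \<Rightarrow> real"
  assumes ia: "integrable M (\<lambda>x. (a x)^2)"
  shows "integrable M (\<lambda>x. (c * a x)^2)"
  using integrable_mult_right[OF ia, of "c^2"] by (simp add: power_mult_distrib)

lemma sqi_diff:
  fixes a b :: "'a \<Rightarrow> real"
  assumes ia: "integrable M (\<lambda>x. (a x)^2)" and ib: "integrable M (\<lambda>x. (b x)^2)"
    and am[measurable]: "a \<in> borel_measurable M" and bm[measurable]: "b \<in> borel_measurable M"
  shows "integrable M (\<lambda>x. (a x - b x)^2)"
proof -
  have "integrable M (\<lambda>x. (a x + (-1) * b x)^2)" by (rule sqi_add[OF ia sqi_cmult[OF ib]]) measurable
  then show ?thesis by simp
qed

lemma sqi_mult:
  fixes a b :: "'a \<Rightarrow> real"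
  assumes ia: "integrable M (\<lambda>x. (a x)^2)" and ib: "integrable M (\<lambda>x. (b x)^2)"
    and am[measurable]: "a \<in> borel_measurable M" and bm[measurable]: "b \<in> borel_measurable M"
  shows "integrable M (\<lambda>x. a x * b x)"
proof (rule Bochner_Integration.integrable_bound)
  show "integrable M (\<lambda>x. (a x)^2 + (b x)^2)" using Bochner_Integration.integrable_add[OF ia ib] by simp
  show "(\<lambda>x. a x * b x) \<in> borel_measurable M" by measurable
  show "AE x in M. norm (a x * b x) \<le> norm ((a x)^2 + (b x)^2)"
  proof (intro AE_I2)
    fix x have "0 \<le> (\<bar>a x\<bar> - \<bar>b x\<bar>)^2" by simp
    moreover have "(\<bar>a x\<bar> - \<bar>b x\<bar>)^2 = (a x)^2 + (b x)^2 - 2 * \<bar>a x\<bar> * \<bar>b x\<bar>"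
      by (simp add: power2_eq_square algebra_simps)
    ultimately have "2 * \<bar>a x\<bar> * \<bar>b x\<bar> \<le> (a x)^2 + (b x)^2" by linarith
    moreover have "\<bar>a x\<bar> * \<bar>b x\<bar> \<ge> 0" by simp
    ultimately have "\<bar>a x\<bar> * \<bar>b x\<bar> \<le> (a x)^2 + (b x)^2" by linarith
    moreover have "0 \<le> (a x)^2 + (b x)^2" by simp
    ultimately show "norm (a x * b x) \<le> norm ((a x)^2 + (b x)^2)" by (simp add: abs_mult)
  qed
qed

locale bfsf = qbfs +
  assumes tri: "\<And>f g. f \<in> X \<Longrightarrow> g \<in> X \<Longrightarrow> N (\<lambda>x. f x + g x) \<le> N f + N g"
    and fat: "fatou_property X N"
begin

lemma fatou_liminf:
  assumes h: "\<And>n. h n \<in> X" "\<And>n. N (h n) \<le> 1" and pm: "p \<in> borel_measurable lebesgue"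
    and conv: "AE x in lebesgue. (\<lambda>n. h n x) \<longlonglongrightarrow> p x"
  shows "p \<in> X \<and> N p \<le> 1"
proof -
  have hm[measurable]: "h n \<in> borel_measurable lebesgue" for n using meas[OF h(1)] .
  define v where "v n x = (INF k\<in>{n..}. ennreal \<bar>h k x\<bar>)" for n x
  have vm[measurable]: "(\<lambda>x. v n x) \<in> borel_measurable lebesgue" for n unfolding v_def by measurable
  have vle: "v n x \<le> ennreal \<bar>h n x\<bar>" for n x unfolding v_def by (rule INF_lower) simp
  have vmono: "v n x \<le> v m x" if "n \<le> m" for n m x unfolding v_def using that by (intro INF_mono) auto
  define w where "w n x = enn2real (v n x)" for n x
  have vfin: "v n x < top" for n x using vle[of n x] by (simp add: le_less_trans)
  have wv: "ennreal (w n x) = v n x" for n x unfolding w_def using vfin by simp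
  have wm: "w n \<in> borel_measurable lebesgue" for n unfolding w_def by measurable
  have wle: "\<bar>w n x\<bar> \<le> \<bar>h n x\<bar>" for n x
    using vle[of n x] unfolding w_def by (simp add: enn2real_leI)
  have wX: "w n \<in> X" and wN: "N (w n) \<le> 1" for n
  proof -
    have ae: "AE x in lebesgue. \<bar>w n x\<bar> \<le> \<bar>h n x\<bar>" by (intro AE_I2 wle)
    show "w n \<in> X" by (rule ideal_D(1)[OF idl h(1) wm ae])
    show "N (w n) \<le> 1" using ideal_D(2)[OF idl h(1) wm ae] h(2)[of n] by simp
  qed
  have wmono: "w n x \<le> w (Suc n) x" for n x
    unfolding w_def using vmono[of n "Suc n" x] vfin by (intro enn2real_mono) auto
  have wnn: "0 \<le> w n x" for n x unfolding w_def by simp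
  have wconv: "AE x in lebesgue. (\<lambda>n. w n x) \<longlonglongrightarrow> \<bar>p x\<bar>"
    using conv
  proof eventually_elim
    case (elim x)
    then have c: "(\<lambda>n. ennreal \<bar>h n x\<bar>) \<longlonglongrightarrow> ennreal \<bar>p x\<bar>"
      by (intro tendsto_ennrealI tendsto_rabs)
    have "liminf (\<lambda>n. ennreal \<bar>h n x\<bar>) = ennreal \<bar>p x\<bar>" by (rule lim_imp_Liminf[OF _ c]) simp
    then have s: "(SUP n. v n x) = ennreal \<bar>p x\<bar>" unfolding v_def liminf_SUP_INF by simp
    have "incseq (\<lambda>n. v n x)" unfolding incseq_def using vmono by blast
    then have "(\<lambda>n. v n x) \<longlonglongrightarrow> ennreal \<bar>p x\<bar>" using LIMSEQ_SUP s by metis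
    then have "(\<lambda>n. enn2real (v n x)) \<longlonglongrightarrow> \<bar>p x\<bar>" by (intro tendsto_enn2real) auto
    then show ?case unfolding w_def .
  qed
  have pam: "(\<lambda>x. \<bar>p x\<bar>) \<in> borel_measurable lebesgue" using pm by measurable
  have bdd: "bounded (range (\<lambda>n. N (w n)))"
  proof -
    have "\<bar>N (w n)\<bar> \<le> 1" for n using wN[of n] qn_facts(5)[OF qn wX[of n]] by simp
    then show ?thesis unfolding bounded_iff by (intro exI[of _ 1]) auto
  qed
  have "(\<lambda>x. \<bar>p x\<bar>) \<in> X \<and> N (\<lambda>x. \<bar>p x\<bar>) = (SUP n. N (w n))"
    using fat unfolding fatou_property_def
  proof (elim allE impE)
    show "(\<forall>n. w n \<in> X) \<and> (\<lambda>x. \<bar>p x\<bar>) \<in> borel_measurable lebesgue \<and>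
      (AE x in lebesgue. (\<forall>n. 0 \<le> w n x \<and> w n x \<le> w (Suc n) x) \<and> (\<lambda>n. w n x) \<longlonglongrightarrow> \<bar>p x\<bar>) \<and>
      bounded (range (\<lambda>n. N (w n)))"
      using wX pam wconv wnn wmono bdd by (auto elim!: eventually_mono)
  qed auto
  then have paX: "(\<lambda>x. \<bar>p x\<bar>) \<in> X" and paN: "N (\<lambda>x. \<bar>p x\<bar>) \<le> 1"
    using wN by (auto intro!: cSUP_least)
  have "p \<in> X" "N p \<le> N (\<lambda>x. \<bar>p x\<bar>)" using ideal_D[OF idl paX pm] by auto
  then show ?thesis using paN by simp
qed

end


lemma arith_step: "2 / (real (4^(Suc k + 1)) + 1) + 2 / (real (4^(k+1)) + 1) \<le> (1/4::real)^k"
proof -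
  have a: "2 / (real (4^(Suc k + 1)) + 1) \<le> 2 / 4^(k+2)" by (intro divide_left_mono) (auto intro!: mult_pos_pos add_pos_pos)
  have b: "2 / (real (4^(k+1)) + 1) \<le> 2 / 4^(k+1)" by (intro divide_left_mono) (auto intro!: mult_pos_pos add_pos_pos)
  have c: "2 / (4::real)^(k+2) + 2 / 4^(k+1) = (1/4)^k * (5/8)" by (simp add: power_add field_simps)
  have "(1/4::real)^k * (5/8) \<le> (1/4)^k" by simp
  then show ?thesis using a b c by linarith
qed

lemma amgm_abs:
  fixes a t :: real assumes "a > 0"
  shows "\<bar>t\<bar> \<le> (a * t^2 + 1 / a) / 2"
proof -
  have "0 \<le> (a * \<bar>t\<bar> - 1)^2" by simp
  also have "(a * \<bar>t\<bar> - 1)^2 = a * (a * t^2 + 1/a - 2 * \<bar>t\<bar>)"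
    using assms by (simp add: power2_eq_square field_simps)
  finally have "0 \<le> a * t^2 + 1/a - 2 * \<bar>t\<bar>" using assms by (simp add: zero_le_mult_iff)
  then show ?thesis by simp
qed

context bfsf
begin

lemma core:
  fixes E :: "'a set" and f :: "'a \<Rightarrow> real" and B :: real
  assumes Em[measurable]: "E \<in> sets lebesgue" and Efin: "emeasure lebesgue E < \<infinity>"
    and fm[measurable]: "f \<in> borel_measurable lebesgue" and fb: "\<And>x. \<bar>f x\<bar> \<le> B"
    and fz: "\<And>x. x \<notin> E \<Longrightarrow> f x = 0" and nK: "\<not> (f \<in> X \<and> N f \<le> 1)"
  shows "\<exists>G\<in>kothe X. ennreal (kothe_norm X N G) < (\<integral>\<^sup>+x. ennreal \<bar>f x * G x\<bar> \<partial>lebesgue)"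
proof -
  define m where "m = measure lebesgue E"
  have Eint: "integrable lebesgue (indicator E :: 'a \<Rightarrow> real)" using Em Efin by simp
  have intE: "(\<integral>x. indicator E x \<partial>lebesgue) = m" unfolding m_def by simp
  have f2: "integrable lebesgue (\<lambda>x. (f x)^2)"
  proof (rule Bochner_Integration.integrable_bound)
    show "integrable lebesgue (\<lambda>x. B^2 * indicator E x)" using Eint by simp
    show "(\<lambda>x. (f x)^2) \<in> borel_measurable lebesgue" by measurable
    show "AE x in lebesgue. norm ((f x)^2) \<le> norm (B^2 * indicator E x)"
    proof (intro AE_I2)
      fix x show "norm ((f x)^2) \<le> norm (B^2 * indicator E x)"
      proof (cases "x \<in> E")
        case True
        have "\<bar>f x\<bar>^2 \<le> \<bar>B\<bar>^2" using fb[of x] by (intro power_mono) auto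
        then show ?thesis using True by simp
      qed (simp add: fz)
    qed
  qed
  define K where "K = {h. h \<in> X \<and> N h \<le> 1 \<and> (\<forall>x. x \<notin> E \<longrightarrow> h x = 0) \<and> integrable lebesgue (\<lambda>x. (h x)^2)}"
  have Km: "h \<in> borel_measurable lebesgue" if "h \<in> K" for h using that meas unfolding K_def by blast
  define D where "D h = (\<integral>x. (f x - h x)^2 \<partial>lebesgue)" for h
  have Dint: "integrable lebesgue (\<lambda>x. (f x - h x)^2)" if "h \<in> K" for h
    using that sqi_diff[OF f2 _ fm Km[OF that]] unfolding K_def by blast
  have Dnn: "0 \<le> D h" for h unfolding D_def by simp
  have N0: "N (\<lambda>x. 0) = 0" using qn_facts(6)[OF qn qn_facts(2)[OF qn]] by simp
  have K0: "(\<lambda>x. 0) \<in> K" unfolding K_def using qn_facts(2)[OF qn] N0 by simp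
  have Kconv: "(\<lambda>x. (1 - t) * a x + t * b x) \<in> K" if a: "a \<in> K" and b: "b \<in> K" and t: "0 \<le> t" "t \<le> 1" for a b t
  proof -
    have aX: "a \<in> X" and bX: "b \<in> X" using a b unfolding K_def by auto
    have X1: "(\<lambda>x. (1 - t) * a x) \<in> X" "(\<lambda>x. t * b x) \<in> X" using qn_facts(4)[OF qn] aX bX by auto
    have "N (\<lambda>x. (1 - t) * a x + t * b x) \<le> N (\<lambda>x. (1 - t) * a x) + N (\<lambda>x. t * b x)" by (rule tri[OF X1])
    also have "\<dots> = (1 - t) * N a + t * N b" using qn_facts(7)[OF qn aX] qn_facts(7)[OF qn bX] t by simp
    also have "\<dots> \<le> (1 - t) * 1 + t * 1" using a b t unfolding K_def by (intro add_mono mult_left_mono) auto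
    finally have Nle: "N (\<lambda>x. (1 - t) * a x + t * b x) \<le> 1" by simp
    have "integrable lebesgue (\<lambda>x. ((1 - t) * a x + t * b x)^2)"
      using a b Km[OF a] Km[OF b] unfolding K_def by (intro sqi_add sqi_cmult) (auto)
    then show ?thesis using Nle qn_facts(3)[OF qn X1] a b unfolding K_def by auto
  qed
  define d where "d = Inf (D ` K)"
  have bddK: "bdd_below (D ` K)" by (rule bdd_belowI[of _ 0]) (auto simp: Dnn)
  have dle: "d \<le> D h" if "h \<in> K" for h unfolding d_def using that bddK by (intro cInf_lower) auto
  have dnn: "0 \<le> d" unfolding d_def using K0 Dnn by (intro cInf_greatest) auto
  have "\<exists>h. h \<in> K \<and> D h < d + 1 / (real n + 1)" for n :: nat
  proof -
    have "Inf (D ` K) < d + 1 / (real n + 1)" unfolding d_def by simp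
    then obtain y where "y \<in> D ` K" "y < d + 1 / (real n + 1)"
      using cInf_less_iff[of "D ` K"] K0 bddK by blast
    then show ?thesis by blast
  qed
  then obtain hs where hs': "\<forall>n. hs n \<in> K \<and> D (hs n) < d + 1 / (real n + 1)"
    using choice[of "\<lambda>n h. h \<in> K \<and> D h < d + 1 / (real n + 1)"] by blast
  have hsK: "hs n \<in> K" and hsD: "D (hs n) < d + 1 / (real n + 1)" for n using hs' by auto
  have para: "(\<integral>x. (a x - b x)^2 \<partial>lebesgue) \<le> 2 * D a + 2 * D b - 4 * d" if a: "a \<in> K" and b: "b \<in> K" for a b
  proof -
    define c where "c = (\<lambda>x. (1 - 1/2) * a x + (1/2) * b x)"
    have cK: "c \<in> K" unfolding c_def by (rule Kconv[OF a b]) auto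
    have am[measurable]: "a \<in> borel_measurable lebesgue" and bm[measurable]: "b \<in> borel_measurable lebesgue"
      using Km a b by auto
    have pw: "(a x - b x)^2 = 2 * (f x - a x)^2 + 2 * (f x - b x)^2 - 4 * (f x - c x)^2" for x
      unfolding c_def by (simp add: power2_eq_square algebra_simps)
    have "(\<integral>x. (a x - b x)^2 \<partial>lebesgue) = (\<integral>x. 2 * (f x - a x)^2 + 2 * (f x - b x)^2 - 4 * (f x - c x)^2 \<partial>lebesgue)"
      by (simp add: pw)
    also have "\<dots> = 2 * D a + 2 * D b - 4 * D c"
      unfolding D_def using Dint[OF a] Dint[OF b] Dint[OF cK] by simp
    also have "\<dots> \<le> 2 * D a + 2 * D b - 4 * d" using dle[OF cK] by simp
    finally show ?thesis .
  qed
  define s where "s k = hs (4^(k+1))" for k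
  have sK: "s k \<in> K" for k unfolding s_def by (rule hsK)
  have sm[measurable]: "s k \<in> borel_measurable lebesgue" for k using Km[OF sK] .
  have sD: "D (s k) < d + 1 / (real (4^(k+1)) + 1)" for k unfolding s_def using hsD .
  define dd where "dd k x = s (Suc k) x - s k x" for k x
  have ddm[measurable]: "dd k \<in> borel_measurable lebesgue" for k unfolding dd_def by measurable
  have ddz: "dd k x = 0" if "x \<notin> E" for k x using sK that unfolding dd_def K_def by auto
  have dd2i: "integrable lebesgue (\<lambda>x. (dd k x)^2)" for k
    unfolding dd_def using sK sm by (intro sqi_diff) (auto simp: K_def)
  have dd2: "(\<integral>x. (dd k x)^2 \<partial>lebesgue) \<le> (1/4)^k" for k
  proof -
    have "(\<integral>x. (dd k x)^2 \<partial>lebesgue) \<le> 2 * D (s (Suc k)) + 2 * D (s k) - 4 * d"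
      unfolding dd_def by (rule para[OF sK sK])
    also have "\<dots> \<le> 2 / (real (4^(Suc k + 1)) + 1) + 2 / (real (4^(k+1)) + 1)"
      using sD[of k] sD[of "Suc k"] by (simp add: field_simps)
    also have "\<dots> \<le> (1/4)^k" by (rule arith_step)
    finally show ?thesis .
  qed
  have ddL1: "(\<integral>\<^sup>+x. ennreal \<bar>dd k x\<bar> \<partial>lebesgue) \<le> ennreal ((1 + m) / 2 * (1/2)^k)" for k
  proof -
    define a :: real where "a = 2^k"
    have apos: "a > 0" unfolding a_def by simp
    have pw: "\<bar>dd k x\<bar> \<le> (a * (dd k x)^2 + (1/a) * indicator E x) / 2" for x
    proof (cases "x \<in> E")
      case True then show ?thesis using amgm_abs[OF apos, of "dd k x"] by simp
    qed (simp add: ddz)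
    have ii: "integrable lebesgue (\<lambda>x. (a * (dd k x)^2 + (1/a) * indicator E x) / 2)"
      using dd2i[of k] Eint by simp
    have "(\<integral>\<^sup>+x. ennreal \<bar>dd k x\<bar> \<partial>lebesgue) \<le> (\<integral>\<^sup>+x. ennreal ((a * (dd k x)^2 + (1/a) * indicator E x) / 2) \<partial>lebesgue)"
      by (intro nn_integral_mono ennreal_leI pw)
    also have "\<dots> = ennreal (\<integral>x. (a * (dd k x)^2 + (1/a) * indicator E x) / 2 \<partial>lebesgue)"
      by (rule nn_integral_eq_integral[OF ii]) (auto intro!: AE_I2 simp: apos less_imp_le)
    also have "\<dots> \<le> ennreal ((1 + m) / 2 * (1/2)^k)"
    proof (rule ennreal_leI)
      have "(\<integral>x. (a * (dd k x)^2 + (1/a) * indicator E x) / 2 \<partial>lebesgue) = (a * (\<integral>x. (dd k x)^2 \<partial>lebesgue) + (1/a) * m) / 2"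
        using dd2i[of k] Eint intE by simp
      also have "\<dots> \<le> (a * (1/4)^k + (1/a) * m) / 2"
        using dd2[of k] apos by (intro divide_right_mono add_right_mono mult_left_mono) auto
      also have "\<dots> = (1 + m) / 2 * (1/2)^k"
        unfolding a_def by (simp add: field_simps power_divide power_mult_distrib[symmetric])
      finally show "(\<integral>x. (a * (dd k x)^2 + (1/a) * indicator E x) / 2 \<partial>lebesgue) \<le> (1 + m) / 2 * (1/2)^k" .
    qed
    finally show ?thesis .
  qed
  have mnn: "0 \<le> m" unfolding m_def by simp
  define GG where "GG x = (\<Sum>k. ennreal \<bar>dd k x\<bar>)" for x
  have GGm[measurable]: "GG \<in> borel_measurable lebesgue" unfolding GG_def by measurable
  have "(\<integral>\<^sup>+x. GG x \<partial>lebesgue) = (\<Sum>k. \<integral>\<^sup>+x. ennreal \<bar>dd k x\<bar> \<partial>lebesgue)"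
    unfolding GG_def by (rule nn_integral_suminf) measurable
  also have "\<dots> \<le> (\<Sum>k. ennreal ((1 + m) / 2 * (1/2)^(k+0)))"
  proof (intro suminf_le)
    fix k show "(\<integral>\<^sup>+x. ennreal \<bar>dd k x\<bar> \<partial>lebesgue) \<le> ennreal ((1 + m) / 2 * (1/2)^(k+0))"
      using ddL1[of k] by (simp only: add_0_right)
  qed auto
  also have "\<dots> = ennreal ((1 + m) / 2 * 2 * (1/2)^0)" using mnn by (intro geom_tail_ennreal) auto
  finally have GGint: "(\<integral>\<^sup>+x. GG x \<partial>lebesgue) \<noteq> \<infinity>" by (auto simp: top_unique)
  have GGfin: "AE x in lebesgue. GG x \<noteq> \<infinity>" by (rule nn_integral_PInf_AE[OF GGm GGint])
  define p where "p x = s 0 x + (\<Sum>k. dd k x)" for x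
  have pm[measurable]: "p \<in> borel_measurable lebesgue" unfolding p_def by measurable
  have tele: "s k x = s 0 x + (\<Sum>j<k. dd j x)" for k x
    unfolding dd_def by (subst sum_lessThan_telescope) simp
  have sconv: "AE x in lebesgue. (\<lambda>k. s k x) \<longlonglongrightarrow> p x"
    using GGfin
  proof eventually_elim
    case (elim x)
    have "summable (\<lambda>k. \<bar>dd k x\<bar>)" using elim unfolding GG_def by (intro summable_suminf_not_top) auto
    then have "summable (\<lambda>k. dd k x)" by (rule summable_rabs_cancel)
    then have "(\<lambda>k. \<Sum>j<k. dd j x) \<longlonglongrightarrow> (\<Sum>k. dd k x)" by (rule summable_LIMSEQ)
    then have "(\<lambda>k. s 0 x + (\<Sum>j<k. dd j x)) \<longlonglongrightarrow> p x" unfolding p_def by (intro tendsto_add tendsto_const)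
    then show ?case by (subst tele) 
  qed
  have pz: "p x = 0" if "x \<notin> E" for x
    using sK[of 0] that ddz[OF that] unfolding p_def K_def by simp
  have sX: "s k \<in> X" "N (s k) \<le> 1" for k using sK unfolding K_def by auto
  have pX: "p \<in> X \<and> N p \<le> 1" by (rule fatou_liminf[OF sX pm sconv])
  have Dconv: "(\<lambda>k. D (s k)) \<longlonglongrightarrow> d"
  proof (rule tendsto_sandwich[of "\<lambda>k. d" _ _ "\<lambda>k. d + 1 / real (Suc k)"])
    show "eventually (\<lambda>k. d \<le> D (s k)) sequentially" using dle[OF sK] by simp
    have "D (s k) \<le> d + 1 / real (Suc k)" for k
    proof -
      have "real (Suc k) \<le> real (4^(k+1)) + 1"
      proof -
        have "k < 4^k" by (rule less_exp[THEN less_le_trans]) (simp add: power_mono)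
        then have "k + 1 \<le> 4^(k+1)" by simp
        then have "real (k + 1) \<le> real (4^(k+1))" by (simp only: of_nat_le_iff)
        then show ?thesis by simp
      qed
      then have "1 / (real (4^(k+1)) + 1) \<le> 1 / real (Suc k)" by (intro divide_left_mono) auto
      then show ?thesis using sD[of k] by linarith
    qed
    then show "eventually (\<lambda>k. D (s k) \<le> d + 1 / real (Suc k)) sequentially" by simp
    show "(\<lambda>k. d) \<longlonglongrightarrow> d" by simp
    have "(\<lambda>k. 1 / real (Suc k)) \<longlonglongrightarrow> 0" using LIMSEQ_Suc[OF lim_inverse_n'] by simp
    then show "(\<lambda>k. d + 1 / real (Suc k)) \<longlonglongrightarrow> d" using tendsto_add[OF tendsto_const[of d]] by fastforce
  qed
  have fp_nn: "(\<integral>\<^sup>+x. ennreal ((f x - p x)^2) \<partial>lebesgue) \<le> ennreal d"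
  proof -
    have "(\<integral>\<^sup>+x. ennreal ((f x - p x)^2) \<partial>lebesgue) = (\<integral>\<^sup>+x. liminf (\<lambda>k. ennreal ((f x - s k x)^2)) \<partial>lebesgue)"
    proof (rule nn_integral_cong_AE)
      show "AE x in lebesgue. ennreal ((f x - p x)^2) = liminf (\<lambda>k. ennreal ((f x - s k x)^2))"
        using sconv
      proof eventually_elim
        case (elim x)
        then have "(\<lambda>k. ennreal ((f x - s k x)^2)) \<longlonglongrightarrow> ennreal ((f x - p x)^2)"
          by (intro tendsto_ennrealI tendsto_intros)
        then show ?case by (intro lim_imp_Liminf[symmetric]) auto
      qed
    qed
    also have "\<dots> \<le> liminf (\<lambda>k. \<integral>\<^sup>+x. ennreal ((f x - s k x)^2) \<partial>lebesgue)"
      by (rule nn_integral_liminf) measurable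
    also have "(\<lambda>k. \<integral>\<^sup>+x. ennreal ((f x - s k x)^2) \<partial>lebesgue) = (\<lambda>k. ennreal (D (s k)))"
      unfolding D_def by (intro ext nn_integral_eq_integral Dint sK) auto
    also have "liminf (\<lambda>k. ennreal (D (s k))) = ennreal d"
      by (intro lim_imp_Liminf tendsto_ennrealI Dconv) auto
    finally show ?thesis .
  qed
  have fp_int: "integrable lebesgue (\<lambda>x. (f x - p x)^2)"
    unfolding integrable_iff_bounded using fp_nn by (auto simp: le_less_trans)
  have p2: "integrable lebesgue (\<lambda>x. (p x)^2)"
  proof -
    have "integrable lebesgue (\<lambda>x. (f x - (f x - p x))^2)" by (rule sqi_diff[OF f2 fp_int]) measurable
    then show ?thesis by simp
  qed
  have pK: "p \<in> K" unfolding K_def using pX pz p2 by auto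
  have Dp: "D p = d"
  proof -
    have "ennreal (D p) = (\<integral>\<^sup>+x. ennreal ((f x - p x)^2) \<partial>lebesgue)"
      unfolding D_def by (rule nn_integral_eq_integral[OF fp_int, symmetric]) auto
    then have "ennreal (D p) \<le> ennreal d" using fp_nn by simp
    then have "D p \<le> d" using dnn by (simp add: ennreal_le_iff)
    then show ?thesis using dle[OF pK] by simp
  qed
  define g where "g x = f x - p x" for x
  have gm[measurable]: "g \<in> borel_measurable lebesgue" unfolding g_def by measurable
  have g2: "integrable lebesgue (\<lambda>x. (g x)^2)" unfolding g_def by (rule fp_int)
  have Ksq: "integrable lebesgue (\<lambda>x. (h x)^2)" if "h \<in> K" for h using that unfolding K_def by blast
  have gint: "integrable lebesgue (\<lambda>x. g x * h x)" if "h \<in> K" for h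
    by (rule sqi_mult[OF g2 Ksq[OF that] gm Km[OF that]])
  have var: "(\<integral>x. g x * h x \<partial>lebesgue) \<le> (\<integral>x. g x * p x \<partial>lebesgue)" if h: "h \<in> K" for h
  proof -
    have hm[measurable]: "h \<in> borel_measurable lebesgue" using Km[OF h] .
    define W where "W = (\<integral>x. (h x - p x)^2 \<partial>lebesgue)"
    have Wi: "integrable lebesgue (\<lambda>x. (h x - p x)^2)" by (rule sqi_diff[OF Ksq[OF h] p2 hm pm])
    have Wnn: "0 \<le> W" unfolding W_def by simp
    define c where "c = (\<integral>x. g x * (h x - p x) \<partial>lebesgue)"
    have ci: "integrable lebesgue (\<lambda>x. g x * (h x - p x))"
      by (rule sqi_mult[OF g2 Wi[unfolded power2_eq_square, folded power2_eq_square]]) (use Wi in \<open>auto intro: sqi_mult\<close>)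
    have c_eq: "c = (\<integral>x. g x * h x \<partial>lebesgue) - (\<integral>x. g x * p x \<partial>lebesgue)"
      unfolding c_def using gint[OF h] gint[OF pK] by (simp add: right_diff_distrib)
    have "c \<le> 0"
    proof (rule ccontr)
      assume "\<not> c \<le> 0"
      then have cpos: "c > 0" by simp
      define t where "t = min 1 (c / (W + 1))"
      have tpos: "t > 0" and t1: "t \<le> 1" unfolding t_def using cpos Wnn by auto
      define q where "q = (\<lambda>x. (1 - t) * p x + t * h x)"
      have qK: "q \<in> K" unfolding q_def by (rule Kconv[OF pK h]) (use tpos t1 in auto)
      have pwq: "(f x - q x)^2 = (g x)^2 - 2 * t * (g x * (h x - p x)) + t^2 * (h x - p x)^2" for x
        unfolding q_def g_def by (simp add: power2_eq_square algebra_simps)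
      have "D q = (\<integral>x. (g x)^2 - 2 * t * (g x * (h x - p x)) + t^2 * (h x - p x)^2 \<partial>lebesgue)"
        unfolding D_def by (simp add: pwq)
      also have "\<dots> = D p - 2 * t * c + t^2 * W"
        unfolding D_def W_def c_def g_def[symmetric] using g2 ci Wi by (simp add: g_def)
      finally have "D q = D p - 2 * t * c + t^2 * W" .
      then have "2 * t * c \<le> t^2 * W" using dle[OF qK] Dp by simp
      then have "2 * c \<le> t * W" using tpos by (simp add: power2_eq_square mult.assoc)
      moreover have "t * W \<le> c / (W + 1) * W" unfolding t_def using Wnn by (intro mult_right_mono) auto
      moreover have "c / (W + 1) * W < c"
      proof -
        have "c / (W + 1) * W = c * (W / (W + 1))" by simp
        also have "\<dots> < c * 1" using cpos Wnn by (intro mult_strict_left_mono) auto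
        finally show ?thesis by simp
      qed
      ultimately show False using cpos by linarith
    qed
    then show ?thesis using c_eq by simp
  qed
  define sv where "sv = (\<integral>x. g x * p x \<partial>lebesgue)"
  have sv0: "0 \<le> sv" using var[OF K0] unfolding sv_def by simp
  have gpos: "(\<integral>x. (g x)^2 \<partial>lebesgue) > 0"
  proof (rule ccontr)
    assume "\<not> ?thesis"
    moreover have "0 \<le> (\<integral>x. (g x)^2 \<partial>lebesgue)" by (intro integral_nonneg_AE) simp
    ultimately have "(\<integral>x. (g x)^2 \<partial>lebesgue) = 0" by linarith
    then have "AE x in lebesgue. (g x)^2 = 0" using integral_nonneg_eq_0_iff_AE[OF g2] by simp
    then have ae: "AE x in lebesgue. \<bar>f x\<bar> \<le> \<bar>p x\<bar>" by eventually_elim (simp add: g_def)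
    have "f \<in> X" "N f \<le> N p" using ideal_D[OF idl conjunct1[OF pX] fm ae] by auto
    then show False using nK pX by auto
  qed
  have gf: "(\<integral>x. g x * f x \<partial>lebesgue) = sv + (\<integral>x. (g x)^2 \<partial>lebesgue)"
  proof -
    have "(\<lambda>x. g x * f x) = (\<lambda>x. g x * p x + (g x)^2)" by (intro ext) (simp add: g_def power2_eq_square algebra_simps)
    then show ?thesis unfolding sv_def using gint[OF pK] g2 by simp
  qed
  define Gf where "Gf x = \<bar>g x\<bar>" for x
  have Gfm: "Gf \<in> borel_measurable lebesgue" unfolding Gf_def by measurable
  have gz: "g x = 0" if "x \<notin> E" for x using that fz pz unfolding g_def by simp
  have Gbound: "(\<integral>\<^sup>+x. ennreal \<bar>h x * Gf x\<bar> \<partial>lebesgue) \<le> ennreal (sv * N h)" if hX: "h \<in> X" for h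
  proof (cases "N h = 0")
    case True
    then have "AE x in lebesgue. h x = 0" using qn_facts(6)[OF qn hX] by simp
    then have "AE x in lebesgue. ennreal \<bar>h x * Gf x\<bar> = 0" by eventually_elim simp
    then have "(\<integral>\<^sup>+x. ennreal \<bar>h x * Gf x\<bar> \<partial>lebesgue) = (\<integral>\<^sup>+x. 0 \<partial>(lebesgue :: 'a measure))"
      by (rule nn_integral_cong_AE)
    then show ?thesis by simp
  next
    case False
    then have Nh: "N h > 0" using qn_facts(5)[OF qn hX] by simp
    have hm[measurable]: "h \<in> borel_measurable lebesgue" using meas[OF hX] .
    define h' where "h' x = inverse (N h) * h x" for x
    have h'X: "h' \<in> X" unfolding h'_def using qn_facts(4)[OF qn hX] .
    have h'N: "N h' = 1" unfolding h'_def using qn_facts(7)[OF qn hX] Nh by simp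
    have h'm[measurable]: "h' \<in> borel_measurable lebesgue" unfolding h'_def by measurable
    define tr where "tr k x = sgn (g x) * min \<bar>h' x\<bar> (real k) * indicator E x" for k :: nat and x
    have trm[measurable]: "tr k \<in> borel_measurable lebesgue" for k unfolding tr_def by measurable
    have trK: "tr k \<in> K" for k
    proof -
      have ae: "AE x in lebesgue. \<bar>tr k x\<bar> \<le> \<bar>h' x\<bar>"
        by (intro AE_I2) (auto simp: tr_def abs_mult sgn_if indicator_def)
      have trX: "tr k \<in> X" and trN: "N (tr k) \<le> 1" using ideal_D[OF idl h'X trm ae] h'N by auto
      have "integrable lebesgue (\<lambda>x. (tr k x)^2)"
      proof (rule sqi_bound[where b = "\<lambda>x. real k * indicator E x"])
        show "integrable lebesgue (\<lambda>x. (real k * indicator E x)^2)"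
        proof -
          have "(\<lambda>x. (real k * indicator E x)^2) = (\<lambda>x. (real k)^2 * indicator E x)"
            by (intro ext) (simp add: indicator_def power_mult_distrib)
          then show ?thesis using Eint by simp
        qed
        show "tr k \<in> borel_measurable lebesgue" by (rule trm)
        fix x
        have "\<bar>tr k x\<bar> \<le> \<bar>real k * indicator E x\<bar>" by (auto simp: tr_def abs_mult sgn_if indicator_def)
        then show "(tr k x)^2 \<le> (real k * indicator E x)^2" by (metis abs_le_square_iff)
      qed
      then show ?thesis unfolding K_def using trX trN by (auto simp: tr_def)
    qed
    have gtr: "g x * tr k x = \<bar>g x\<bar> * min \<bar>h' x\<bar> (real k)" for k x
      using gz[of x] by (cases "x \<in> E") (auto simp: tr_def sgn_if)
    have trbound: "(\<integral>\<^sup>+x. ennreal (\<bar>g x\<bar> * min \<bar>h' x\<bar> (real k)) \<partial>lebesgue) \<le> ennreal sv" for k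
    proof -
      have ii: "integrable lebesgue (\<lambda>x. \<bar>g x\<bar> * min \<bar>h' x\<bar> (real k))" using gint[OF trK[of k]] gtr by simp
      have "(\<integral>\<^sup>+x. ennreal (\<bar>g x\<bar> * min \<bar>h' x\<bar> (real k)) \<partial>lebesgue) = ennreal (\<integral>x. \<bar>g x\<bar> * min \<bar>h' x\<bar> (real k) \<partial>lebesgue)"
        by (rule nn_integral_eq_integral[OF ii]) auto
      also have "(\<integral>x. \<bar>g x\<bar> * min \<bar>h' x\<bar> (real k) \<partial>lebesgue) = (\<integral>x. g x * tr k x \<partial>lebesgue)" by (simp add: gtr)
      also have "\<dots> \<le> sv" unfolding sv_def by (rule var[OF trK])
      finally show ?thesis by (simp add: ennreal_leI)
    qed
    have lim: "(\<lambda>k. \<integral>\<^sup>+x. ennreal (\<bar>g x\<bar> * min \<bar>h' x\<bar> (real k)) \<partial>lebesgue) \<longlonglongrightarrow> (\<integral>\<^sup>+x. ennreal (\<bar>g x\<bar> * \<bar>h' x\<bar>) \<partial>lebesgue)"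
    proof (rule nn_integral_LIMSEQ)
      show "incseq (\<lambda>k x. ennreal (\<bar>g x\<bar> * min \<bar>h' x\<bar> (real k)))"
        by (auto simp: incseq_def le_fun_def intro!: ennreal_leI mult_left_mono)
      show "\<And>k. (\<lambda>x. ennreal (\<bar>g x\<bar> * min \<bar>h' x\<bar> (real k))) \<in> borel_measurable lebesgue" by measurable
      fix x
      obtain k0 :: nat where k0: "\<bar>h' x\<bar> \<le> real k0" using real_arch_simple by blast
      have "eventually (\<lambda>k. ennreal (\<bar>g x\<bar> * min \<bar>h' x\<bar> (real k)) = ennreal (\<bar>g x\<bar> * \<bar>h' x\<bar>)) sequentially"
      proof (rule eventually_sequentiallyI[of k0])
        fix k assume "k0 \<le> k"
        then have "real k0 \<le> real k" by simp
        then have "\<bar>h' x\<bar> \<le> real k" using k0 by linarith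
        then show "ennreal (\<bar>g x\<bar> * min \<bar>h' x\<bar> (real k)) = ennreal (\<bar>g x\<bar> * \<bar>h' x\<bar>)" by simp
      qed
      then show "(\<lambda>k. ennreal (\<bar>g x\<bar> * min \<bar>h' x\<bar> (real k))) \<longlonglongrightarrow> ennreal (\<bar>g x\<bar> * \<bar>h' x\<bar>)"
        by (rule tendsto_eventually)
    qed
    have h'b: "(\<integral>\<^sup>+x. ennreal (\<bar>g x\<bar> * \<bar>h' x\<bar>) \<partial>lebesgue) \<le> ennreal sv"
      using lim trbound by (intro LIMSEQ_le_const2[OF lim]) auto
    have "(\<integral>\<^sup>+x. ennreal \<bar>h x * Gf x\<bar> \<partial>lebesgue) = (\<integral>\<^sup>+x. ennreal (N h) * ennreal (\<bar>g x\<bar> * \<bar>h' x\<bar>) \<partial>lebesgue)"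
    proof (intro nn_integral_cong)
      fix x
      have "\<bar>h x * Gf x\<bar> = N h * (\<bar>g x\<bar> * \<bar>h' x\<bar>)" unfolding Gf_def h'_def using Nh by (simp add: abs_mult)
      then show "ennreal \<bar>h x * Gf x\<bar> = ennreal (N h) * ennreal (\<bar>g x\<bar> * \<bar>h' x\<bar>)"
        using Nh by (simp add: ennreal_mult)
    qed
    also have "\<dots> = ennreal (N h) * (\<integral>\<^sup>+x. ennreal (\<bar>g x\<bar> * \<bar>h' x\<bar>) \<partial>lebesgue)"
      by (rule nn_integral_cmult) measurable
    also have "\<dots> \<le> ennreal (N h) * ennreal sv" by (intro mult_left_mono h'b) auto
    also have "\<dots> = ennreal (sv * N h)" using Nh sv0 by (simp add: ennreal_mult mult_ac)
    finally show ?thesis .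
  qed
  have GK: "Gf \<in> kothe X" "kothe_norm X N Gf \<le> sv" using kn_le[OF Gfm sv0 Gbound] by auto
  have fGi: "integrable lebesgue (\<lambda>x. g x * f x)" by (rule sqi_mult[OF g2 f2 gm fm])
  have "ennreal (kothe_norm X N Gf) \<le> ennreal sv" using GK(2) by (rule ennreal_leI)
  also have "\<dots> < ennreal (\<integral>x. g x * f x \<partial>lebesgue)" unfolding gf using sv0 gpos by (simp add: ennreal_less_iff)
  also have "\<dots> \<le> ennreal (\<integral>x. \<bar>f x * Gf x\<bar> \<partial>lebesgue)"
  proof (intro ennreal_leI integral_mono[OF fGi])
    have "(\<lambda>x. \<bar>f x * Gf x\<bar>) = (\<lambda>x. \<bar>g x * f x\<bar>)" by (auto simp: Gf_def abs_mult)
    then show "integrable lebesgue (\<lambda>x. \<bar>f x * Gf x\<bar>)" using integrable_abs[OF fGi] by simp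
    fix x show "g x * f x \<le> \<bar>f x * Gf x\<bar>" unfolding Gf_def abs_mult[symmetric] by (simp add: mult.commute)
  qed
  also have "\<dots> = (\<integral>\<^sup>+x. ennreal \<bar>f x * Gf x\<bar> \<partial>lebesgue)"
  proof (rule nn_integral_eq_integral[symmetric])
    have "(\<lambda>x. \<bar>f x * Gf x\<bar>) = (\<lambda>x. \<bar>g x * f x\<bar>)" by (auto simp: Gf_def abs_mult)
    then show "integrable lebesgue (\<lambda>x. \<bar>f x * Gf x\<bar>)" using integrable_abs[OF fGi] by simp
  qed auto
  finally show ?thesis using GK(1) by blast
qed

end


context bfsf
begin

lemma kothe_sat_bfs: "saturation_property (kothe X)"
  unfolding saturation_property_def
proof (intro ballI impI)
  fix E :: "'a set" assume E: "E \<in> sets lebesgue" "emeasure lebesgue E > 0"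
  obtain Q where Q: "cube Q" "emeasure lebesgue (E \<inter> Q) > 0" using pos_meas_in_cube[OF E] by blast
  have EQm: "E \<inter> Q \<in> sets lebesgue" using E(1) cube_props(1)[OF Q(1)] by auto
  obtain F where F: "F \<in> sets lebesgue" "F \<subseteq> E \<inter> Q" "emeasure lebesgue F > 0" "indicator F \<in> X"
    using sat_D[OF EQm Q(2)] by blast
  have Ffin: "emeasure lebesgue F < \<infinity>"
    using emeasure_mono[of F Q lebesgue] F(2) cube_props(1,3)[OF Q(1)] by auto
  have NF: "N (indicator F) > 0" by (rule N_indicator_pos[OF F(1,3,4)])
  define c where "c = 2 / N (indicator F)"
  have cpos: "c > 0" unfolding c_def using NF by simp
  define f where "f x = c * indicator F x" for x
  have fX: "f \<in> X" unfolding f_def using qn_facts(4)[OF qn F(4)] .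
  have "N f = \<bar>c\<bar> * N (indicator F)" unfolding f_def by (rule qn_facts(7)[OF qn F(4)])
  then have fN: "N f = 2" using cpos NF unfolding c_def by simp
  have fm: "f \<in> borel_measurable lebesgue" using meas[OF fX] .
  have fb: "\<bar>f x\<bar> \<le> c" for x unfolding f_def using cpos by (simp add: indicator_def)
  have fz: "f x = 0" if "x \<notin> F" for x unfolding f_def using that by simp
  obtain G where G: "G \<in> kothe X" "ennreal (kothe_norm X N G) < (\<integral>\<^sup>+x. ennreal \<bar>f x * G x\<bar> \<partial>lebesgue)"
    using core[OF F(1) Ffin fm fb fz] fN by force
  have Gm[measurable]: "G \<in> borel_measurable lebesgue" using kothe_meas[OF G(1)] .
  have ipos: "(\<integral>\<^sup>+x. ennreal \<bar>f x * G x\<bar> \<partial>lebesgue) \<noteq> 0" using G(2) by auto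
  define S where "S k = {x\<in>F. \<bar>G x\<bar> \<ge> 1 / real (Suc k)}" for k
  have Sm: "S k \<in> sets lebesgue" for k
  proof -
    have "{x\<in>space lebesgue. \<bar>G x\<bar> \<ge> 1 / real (Suc k)} \<in> sets lebesgue" by measurable
    then have "{x\<in>space lebesgue. \<bar>G x\<bar> \<ge> 1 / real (Suc k)} \<inter> F \<in> sets lebesgue" using F(1) by auto
    moreover have "S k = {x\<in>space lebesgue. \<bar>G x\<bar> \<ge> 1 / real (Suc k)} \<inter> F" unfolding S_def by auto
    ultimately show ?thesis by simp
  qed
  have "\<exists>k. emeasure lebesgue (S k) \<noteq> 0"
  proof (rule ccontr)
    assume "\<not> ?thesis"
    then have z: "emeasure lebesgue (S k) = 0" for k by blast
    have "emeasure lebesgue (\<Union>k. S k) = 0" using z Sm by (intro emeasure_UN_eq_0) auto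
    then have "AE x in lebesgue. x \<notin> (\<Union>k. S k)" using Sm by (intro AE_I'[of "\<Union>k. S k"]) auto
    then have "AE x in lebesgue. ennreal \<bar>f x * G x\<bar> = 0"
    proof eventually_elim
      case (elim x)
      show ?case
      proof (cases "x \<in> F \<and> G x \<noteq> 0")
        case True
        then have "\<bar>G x\<bar> > 0" by simp
        then obtain k where "1 / real (Suc k) < \<bar>G x\<bar>"
          using reals_Archimedean[of "\<bar>G x\<bar>"] by (auto simp: field_simps)
        then have "x \<in> S k" using True unfolding S_def by auto
        then show ?thesis using elim by blast
      next
        case False then show ?thesis using fz by auto
      qed
    qed
    then have "(\<integral>\<^sup>+x. ennreal \<bar>f x * G x\<bar> \<partial>lebesgue) = (\<integral>\<^sup>+x. 0 \<partial>(lebesgue :: 'a measure))"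
      by (rule nn_integral_cong_AE)
    then show False using ipos by simp
  qed
  then obtain k where k: "emeasure lebesgue (S k) > 0" by (auto simp: zero_less_iff_neq_zero)
  have "indicator (S k) \<in> kothe X"
  proof (rule ideal_D(1)[OF kothe_ideal kothe_cmult[OF G(1), of "real (Suc k)"]])
    show "indicator (S k) \<in> borel_measurable lebesgue" using Sm[of k] by (simp add: borel_measurable_indicator)
    show "AE x in lebesgue. \<bar>indicator (S k) x :: real\<bar> \<le> \<bar>real (Suc k) * G x\<bar>"
    proof (intro AE_I2)
      fix x show "\<bar>indicator (S k) x :: real\<bar> \<le> \<bar>real (Suc k) * G x\<bar>"
      proof (cases "x \<in> S k")
        case True
        then have "1 / real (Suc k) \<le> \<bar>G x\<bar>" unfolding S_def by auto
        then have "1 \<le> real (Suc k) * \<bar>G x\<bar>" by (simp add: field_simps)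
        then show ?thesis using True by (simp add: abs_mult)
      qed simp
    qed
  qed
  moreover have "S k \<subseteq> E" using F(2) unfolding S_def by auto
  ultimately show "\<exists>F\<in>sets lebesgue. F \<subseteq> E \<and> 0 < emeasure lebesgue F \<and> indicator F \<in> kothe X"
    using Sm[of k] k by blast
qed

lemma kothe_BFS_bfs: "BFS (kothe X) (kothe_norm X N)"
  unfolding BFS_def quasi_BFS_def
  using kothe_qn kothe_complete kothe_ideal kothe_sat_bfs kn_triangle by blast

lemma kothe_qbfs: "qbfs (kothe X) (kothe_norm X N)"
  unfolding qbfs_def using kothe_BFS_bfs unfolding BFS_def by blast

lemma LL_a: "f \<in> X \<Longrightarrow> f \<in> kothe (kothe X) \<and> kothe_norm (kothe X) (kothe_norm X N) f \<le> N f"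
proof -
  assume f: "f \<in> X"
  interpret Y: qbfs "kothe X" "kothe_norm X N" by (rule kothe_qbfs)
  have "\<And>g. g \<in> kothe X \<Longrightarrow> (\<integral>\<^sup>+x. ennreal \<bar>g x * f x\<bar> \<partial>lebesgue) \<le> ennreal (N f * kothe_norm X N g)"
    using holder_nn[OF f] by (simp add: mult.commute)
  then show ?thesis using Y.kn_le[OF meas[OF f] qn_facts(5)[OF qn f]] by blast
qed

lemma LL_b1:
  assumes f: "f \<in> kothe (kothe X)" and Em: "E \<in> sets lebesgue" and Efin: "emeasure lebesgue E < \<infinity>"
    and fb: "\<And>x. \<bar>f x\<bar> \<le> B" and fz: "\<And>x. x \<notin> E \<Longrightarrow> f x = 0"
  shows "f \<in> X \<and> N f \<le> kothe_norm (kothe X) (kothe_norm X N) f"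
proof -
  interpret Y: qbfs "kothe X" "kothe_norm X N" by (rule kothe_qbfs)
  define L where "L = kothe_norm (kothe X) (kothe_norm X N) f"
  have L0: "0 \<le> L" unfolding L_def by (rule Y.kn_nonneg[OF f])
  have fm[measurable]: "f \<in> borel_measurable lebesgue" using Y.kothe_meas[OF f] .
  have main: "f \<in> X \<and> N f \<le> lam" if lam: "lam > L" for lam
  proof -
    have lpos: "lam > 0" using lam L0 by simp
    define f' where "f' x = inverse lam * f x" for x
    have f'm: "f' \<in> borel_measurable lebesgue" unfolding f'_def by measurable
    have f'b: "\<bar>f' x\<bar> \<le> inverse lam * \<bar>B\<bar>" for x
      unfolding f'_def using fb[of x] lpos by (auto simp: abs_mult intro!: mult_left_mono)
    have f'z: "f' x = 0" if "x \<notin> E" for x unfolding f'_def using fz[OF that] by simp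
    have "f' \<in> X \<and> N f' \<le> 1"
    proof (rule ccontr)
      assume nK: "\<not> (f' \<in> X \<and> N f' \<le> 1)"
      obtain G where G: "G \<in> kothe X" "ennreal (kothe_norm X N G) < (\<integral>\<^sup>+x. ennreal \<bar>f' x * G x\<bar> \<partial>lebesgue)"
        using core[OF Em Efin f'm f'b f'z nK] by blast
      have Gm[measurable]: "G \<in> borel_measurable lebesgue" using kothe_meas[OF G(1)] .
      have "(\<integral>\<^sup>+x. ennreal \<bar>f' x * G x\<bar> \<partial>lebesgue) = (\<integral>\<^sup>+x. ennreal (inverse lam) * ennreal \<bar>G x * f x\<bar> \<partial>lebesgue)"
        unfolding f'_def using lpos by (intro nn_integral_cong) (simp add: abs_mult ennreal_mult mult_ac)
      also have "\<dots> = ennreal (inverse lam) * (\<integral>\<^sup>+x. ennreal \<bar>G x * f x\<bar> \<partial>lebesgue)"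
        by (rule nn_integral_cmult) measurable
      also have "\<dots> \<le> ennreal (inverse lam) * ennreal (kothe_norm X N G * L)"
        unfolding L_def by (intro mult_left_mono Y.holder_nn[OF G(1) f]) auto
      also have "\<dots> = ennreal (inverse lam * (kothe_norm X N G * L))"
        using lpos kn_nonneg[OF G(1)] L0 by (simp add: ennreal_mult)
      also have "\<dots> \<le> ennreal (kothe_norm X N G)"
      proof (rule ennreal_leI)
        have "inverse lam * L \<le> 1" using lam lpos by (simp add: field_simps)
        then have "inverse lam * L * kothe_norm X N G \<le> 1 * kothe_norm X N G"
          using kn_nonneg[OF G(1)] by (intro mult_right_mono) auto
        then show "inverse lam * (kothe_norm X N G * L) \<le> kothe_norm X N G" by (simp add: mult_ac)
      qed
      finally show False using G(2) by simp
    qed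
    then have f'X: "f' \<in> X" and f'N: "N f' \<le> 1" by auto
    have "(\<lambda>x. lam * f' x) = f" unfolding f'_def using lpos by (intro ext) simp
    moreover have "(\<lambda>x. lam * f' x) \<in> X" using qn_facts(4)[OF qn f'X] .
    moreover have "N (\<lambda>x. lam * f' x) = lam * N f'" using qn_facts(7)[OF qn f'X] lpos by simp
    ultimately show ?thesis using f'N lpos by (metis mult_left_le mult.commute less_imp_le)
  qed
  have "f \<in> X" using main[of "L + 1"] by simp
  moreover have "N f \<le> L"
  proof (rule field_le_epsilon)
    fix e :: real assume "0 < e" then show "N f \<le> L + e" using main[of "L + e"] by simp
  qed
  ultimately show ?thesis unfolding L_def by simp
qed

lemma LL_b:
  assumes f: "f \<in> kothe (kothe X)"
  shows "f \<in> X \<and> N f \<le> kothe_norm (kothe X) (kothe_norm X N) f"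
proof -
  interpret Y: qbfs "kothe X" "kothe_norm X N" by (rule kothe_qbfs)
  define L where "L = kothe_norm (kothe X) (kothe_norm X N) f"
  have fm[measurable]: "f \<in> borel_measurable lebesgue" using Y.kothe_meas[OF f] .
  define t where "t n x = min \<bar>f x\<bar> (real n) * indicator (ball 0 (real n)) x" for n :: nat and x :: 'a
  have ballm[measurable]: "\<And>n::nat. ball (0::'a) (real n) \<in> sets lebesgue" by simp
  have tm[measurable]: "t n \<in> borel_measurable lebesgue" for n unfolding t_def by measurable
  have tle: "\<bar>t n x\<bar> \<le> \<bar>f x\<bar>" for n x unfolding t_def by (auto simp: indicator_def)
  have tY: "t n \<in> kothe (kothe X)" and tL: "kothe_norm (kothe X) (kothe_norm X N) (t n) \<le> L" for n
    using ideal_D[OF Y.kothe_ideal f tm[of n]] tle unfolding L_def by (auto intro: AE_I2)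
  have tX: "t n \<in> X \<and> N (t n) \<le> kothe_norm (kothe X) (kothe_norm X N) (t n)" for n
  proof (rule LL_b1[OF tY, where E = "ball 0 (real n)" and B = "real n"])
    show "ball 0 (real n) \<in> sets lebesgue" by simp
    show "emeasure lebesgue (ball (0::'a) (real n)) < \<infinity>" using emeasure_bounded_finite[of "ball (0::'a) (real n)"] by simp
    show "\<And>x. \<bar>t n x\<bar> \<le> real n" unfolding t_def by (auto simp: indicator_def)
    show "\<And>x. x \<notin> ball 0 (real n) \<Longrightarrow> t n x = 0" unfolding t_def by simp
  qed
  have tN: "N (t n) \<le> L" for n using tX[of n] tL[of n] by simp
  have tnn: "0 \<le> t n x" for n x unfolding t_def by simp
  have tmono: "t n x \<le> t (Suc n) x" for n x
    unfolding t_def by (auto simp: indicator_def)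
  have tconv: "(\<lambda>n. t n x) \<longlonglongrightarrow> \<bar>f x\<bar>" for x
  proof (rule tendsto_eventually)
    obtain n0 :: nat where n0: "max \<bar>f x\<bar> (norm x) < real n0" using reals_Archimedean2 by blast
    show "eventually (\<lambda>n. t n x = \<bar>f x\<bar>) sequentially"
    proof (rule eventually_sequentiallyI[of n0])
      fix n assume "n0 \<le> n"
      then have "real n0 \<le> real n" by simp
      then show "t n x = \<bar>f x\<bar>" using n0 unfolding t_def by (auto simp: indicator_def)
    qed
  qed
  have bdd: "bounded (range (\<lambda>n. N (t n)))"
  proof -
    have "\<bar>N (t n)\<bar> \<le> L" for n using tN[of n] qn_facts(5)[OF qn conjunct1[OF tX[of n]]] by simp
    then show ?thesis unfolding bounded_iff by (intro exI[of _ L]) auto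
  qed
  have fam: "(\<lambda>x. \<bar>f x\<bar>) \<in> borel_measurable lebesgue" by measurable
  have "(\<lambda>x. \<bar>f x\<bar>) \<in> X \<and> N (\<lambda>x. \<bar>f x\<bar>) = (SUP n. N (t n))"
    using fat unfolding fatou_property_def
  proof (elim allE impE)
    show "(\<forall>n. t n \<in> X) \<and> (\<lambda>x. \<bar>f x\<bar>) \<in> borel_measurable lebesgue \<and>
      (AE x in lebesgue. (\<forall>n. 0 \<le> t n x \<and> t n x \<le> t (Suc n) x) \<and> (\<lambda>n. t n x) \<longlonglongrightarrow> \<bar>f x\<bar>) \<and>
      bounded (range (\<lambda>n. N (t n)))"
      using tX fam tnn tmono tconv bdd by auto
  qed auto
  then have faX: "(\<lambda>x. \<bar>f x\<bar>) \<in> X" and faN: "N (\<lambda>x. \<bar>f x\<bar>) \<le> L"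
    using tN by (auto intro!: cSUP_least)
  have "f \<in> X" "N f \<le> N (\<lambda>x. \<bar>f x\<bar>)" using ideal_D[OF idl faX fm] by auto
  then show ?thesis using faN unfolding L_def by simp
qed

lemma LL: "kothe (kothe X) = X" "\<And>f. f \<in> X \<Longrightarrow> kothe_norm (kothe X) (kothe_norm X N) f = N f"
proof -
  show "kothe (kothe X) = X" using LL_a LL_b by blast
  fix f assume "f \<in> X"
  then show "kothe_norm (kothe X) (kothe_norm X N) f = N f"
    using LL_a[of f] LL_b[of f] by fastforce
qed

end


lemma avg_bound_cong:
  assumes "Y1 = Y2" "\<And>f. f \<in> Y1 \<Longrightarrow> N1 f = N2 f"
  shows "avg_bound adm Y1 N1 C \<longleftrightarrow> avg_bound adm Y2 N2 C"
  using assms unfolding avg_bound_def by (metis (no_types, lifting))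

lemma unit_cube_ex: "\<exists>Q::'a::euclidean_space set. cube Q"
  unfolding cube_def by (intro exI[of _ "{x. \<forall>i\<in>Basis. 0 \<bullet> i \<le> x \<bullet> i \<and> x \<bullet> i < 0 \<bullet> i + 1}"] exI[of _ 0] exI[of _ 1]) simp

context qbfs
begin

lemma kn2_le:
  assumes Y: "qbfs (kothe X) (kothe_norm X N)" and f: "f \<in> X"
  shows "f \<in> kothe (kothe X)" "kothe_norm (kothe X) (kothe_norm X N) f \<le> N f"
proof -
  interpret Y: qbfs "kothe X" "kothe_norm X N" by (rule Y)
  have "\<And>g. g \<in> kothe X \<Longrightarrow> (\<integral>\<^sup>+x. ennreal \<bar>g x * f x\<bar> \<partial>lebesgue) \<le> ennreal (N f * kothe_norm X N g)"
    using holder_nn[OF f] by (simp add: mult.commute)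
  then show "f \<in> kothe (kothe X)" "kothe_norm (kothe X) (kothe_norm X N) f \<le> N f"
    using Y.kn_le[OF meas[OF f] qn_facts(5)[OF qn f]] by blast+
qed

lemma part_A:
  assumes A: "in_A X N"
  shows "saturation_property (kothe X) \<and> BFS (kothe X) (kothe_norm X N) \<and>
       in_A (kothe X) (kothe_norm X N) \<and> A_const (kothe X) (kothe_norm X N) \<le> A_const X N"
proof -
  have cubes: "\<And>Q. cube Q \<Longrightarrow> indicator Q \<in> X \<and> indicator Q \<in> kothe X" and bdd: "bdd_above (A_ratios X N)"
    using A unfolding in_A_def by auto
  have sat': "saturation_property (kothe X)" using kothe_sat cubes by blast
  have bfs': "BFS (kothe X) (kothe_norm X N)" using kothe_BFS cubes by blast
  have Y: "qbfs (kothe X) (kothe_norm X N)" using bfs' unfolding qbfs_def BFS_def by blast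
  interpret Y: qbfs "kothe X" "kothe_norm X N" by (rule Y)
  have le: "y \<le> A_const X N" if yin: "y \<in> A_ratios (kothe X) (kothe_norm X N)" for y
  proof -
    obtain Q where Q: "cube Q" and y: "y = kothe_norm X N (indicator Q) * kothe_norm (kothe X) (kothe_norm X N) (indicator Q) / measure lebesgue Q"
      using yin unfolding A_ratios_def by blast
    have "y \<le> kothe_norm X N (indicator Q) * N (indicator Q) / measure lebesgue Q"
      unfolding y using kn2_le(2)[OF Y conjunct1[OF cubes[OF Q]]] kn_nonneg[OF conjunct2[OF cubes[OF Q]]]
      by (intro divide_right_mono mult_left_mono) auto
    also have "\<dots> = N (indicator Q) * kothe_norm X N (indicator Q) / measure lebesgue Q" by (simp add: mult.commute)
    also have "\<dots> \<le> A_const X N" unfolding A_const_def using Q bdd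
      by (intro cSup_upper) (auto simp: A_ratios_def)
    finally show ?thesis .
  qed
  have inA': "in_A (kothe X) (kothe_norm X N)"
    unfolding in_A_def
  proof (intro conjI allI impI)
    fix Q :: "'a set" assume Q: "cube Q"
    show "indicator Q \<in> kothe X" using cubes[OF Q] by blast
    show "indicator Q \<in> kothe (kothe X)" using kn2_le(1)[OF Y] cubes[OF Q] by blast
  next
    show "bdd_above (A_ratios (kothe X) (kothe_norm X N))" by (rule bdd_aboveI[of _ "A_const X N"]) (rule le)
  qed
  have ne: "A_ratios (kothe X) (kothe_norm X N) \<noteq> {}" using unit_cube_ex[where 'a='a] unfolding A_ratios_def by blast
  have "A_const (kothe X) (kothe_norm X N) \<le> A_const X N" unfolding A_const_def[of "kothe X"]
    using le ne by (intro cSup_least) auto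
  then show ?thesis using sat' bfs' inA' by blast
qed

lemma part_adm:
  assumes ga: "good_adm adm" and ex: "\<exists>C. avg_bound adm X N C"
  shows "saturation_property (kothe X) \<and> BFS (kothe X) (kothe_norm X N) \<and>
       (\<exists>C. avg_bound adm (kothe X) (kothe_norm X N) C) \<and>
       Inf {C. 0 \<le> C \<and> avg_bound adm (kothe X) (kothe_norm X N) C} \<le> Inf {C. 0 \<le> C \<and> avg_bound adm X N C}"
proof -
  obtain C where C: "avg_bound adm X N C" using ex by blast
  have cubes: "\<And>Q. cube Q \<Longrightarrow> indicator Q \<in> kothe X" using cubes_from_avg[OF ga C] by blast
  have sat': "saturation_property (kothe X)" using kothe_sat cubes by blast
  have bfs': "BFS (kothe X) (kothe_norm X N)" using kothe_BFS cubes by blast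
  have sub: "{C. 0 \<le> C \<and> avg_bound adm X N C} \<subseteq> {C. 0 \<le> C \<and> avg_bound adm (kothe X) (kothe_norm X N) C}"
    using avg_transfer[OF ga] by blast
  have ne: "{C. 0 \<le> C \<and> avg_bound adm X N C} \<noteq> {}" using C avg_C_nonneg[OF ga C] by blast
  have bb: "bdd_below {C. 0 \<le> C \<and> avg_bound adm (kothe X) (kothe_norm X N) C}" by (rule bdd_belowI[of _ 0]) auto
  have "Inf {C. 0 \<le> C \<and> avg_bound adm (kothe X) (kothe_norm X N) C} \<le> Inf {C. 0 \<le> C \<and> avg_bound adm X N C}"
    by (rule cInf_superset_mono[OF ne bb sub])
  then show ?thesis using sat' bfs' avg_transfer[OF ga C] by blast
qed

end

context bfsf
begin

lemma ratios_eq: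
  assumes cubes: "\<And>Q. cube Q \<Longrightarrow> indicator Q \<in> X"
  shows "A_ratios (kothe X) (kothe_norm X N) = A_ratios X N"
proof -
  have eq: "kothe_norm X N (indicator Q) * kothe_norm (kothe X) (kothe_norm X N) (indicator Q) / measure lebesgue Q =
      N (indicator Q) * kothe_norm X N (indicator Q) / measure lebesgue Q" if "cube Q" for Q
    using LL(2)[OF cubes[OF that]] by (simp add: mult.commute)
  have "(\<lambda>Q. kothe_norm X N (indicator Q) * kothe_norm (kothe X) (kothe_norm X N) (indicator Q) / measure lebesgue Q) ` Collect cube
     = (\<lambda>Q. N (indicator Q) * kothe_norm X N (indicator Q) / measure lebesgue Q) ` Collect cube"
    by (rule image_cong[OF refl], rule eq, simp)
  moreover have "{kothe_norm X N (indicator Q) * kothe_norm (kothe X) (kothe_norm X N) (indicator Q) / measure lebesgue Q |Q. cube Q}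
     = (\<lambda>Q. kothe_norm X N (indicator Q) * kothe_norm (kothe X) (kothe_norm X N) (indicator Q) / measure lebesgue Q) ` Collect cube"
    by blast
  moreover have "{N (indicator Q) * kothe_norm X N (indicator Q) / measure lebesgue Q |Q. cube Q}
     = (\<lambda>Q. N (indicator Q) * kothe_norm X N (indicator Q) / measure lebesgue Q) ` Collect cube"
    by blast
  ultimately show ?thesis unfolding A_ratios_def by simp
qed

lemma part_A_eq:
  shows "(in_A X N \<longleftrightarrow> in_A (kothe X) (kothe_norm X N)) \<and>
       (in_A X N \<longrightarrow> A_const (kothe X) (kothe_norm X N) = A_const X N)"
proof -
  have AA: "in_A X N \<Longrightarrow> A_const (kothe X) (kothe_norm X N) = A_const X N"
    using ratios_eq unfolding in_A_def A_const_def by metis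
  have "in_A (kothe X) (kothe_norm X N) \<Longrightarrow> in_A X N"
  proof -
    assume A': "in_A (kothe X) (kothe_norm X N)"
    have cubes: "\<And>Q. cube Q \<Longrightarrow> indicator Q \<in> X \<and> indicator Q \<in> kothe X"
      using A' LL(1) unfolding in_A_def by auto
    then show "in_A X N" using A' ratios_eq unfolding in_A_def by metis
  qed
  then show ?thesis using part_A AA by blast
qed

lemma part_adm_eq:
  assumes ga: "good_adm adm"
  shows "((\<exists>C. avg_bound adm X N C) \<longleftrightarrow> (\<exists>C. avg_bound adm (kothe X) (kothe_norm X N) C)) \<and>
     ((\<exists>C. avg_bound adm X N C) \<longrightarrow>
        Inf {C. 0 \<le> C \<and> avg_bound adm (kothe X) (kothe_norm X N) C} = Inf {C. 0 \<le> C \<and> avg_bound adm X N C})"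
proof -
  interpret Y: qbfs "kothe X" "kothe_norm X N" by (rule kothe_qbfs)
  have bk: "avg_bound adm X N C" if "avg_bound adm (kothe X) (kothe_norm X N) C" for C
  proof -
    have "avg_bound adm (kothe (kothe X)) (kothe_norm (kothe X) (kothe_norm X N)) C"
      by (rule Y.avg_transfer[OF ga that])
    then show ?thesis using avg_bound_cong[of "kothe (kothe X)" X "kothe_norm (kothe X) (kothe_norm X N)" N] LL
      by blast
  qed
  have "{C. 0 \<le> C \<and> avg_bound adm (kothe X) (kothe_norm X N) C} = {C. 0 \<le> C \<and> avg_bound adm X N C}"
    using bk avg_transfer[OF ga] by blast
  then show ?thesis using bk avg_transfer[OF ga] by auto
qed

end

lemma BFS_qbfs: "BFS X N \<Longrightarrow> qbfs X N" unfolding qbfs_def BFS_def by blast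

lemma BFS_bfsf: "BFS X N \<Longrightarrow> fatou_property X N \<Longrightarrow> bfsf X N"
  unfolding bfsf_def bfsf_axioms_def qbfs_def BFS_def by blast

theorem proposition3p7:
  fixes X :: "('a::euclidean_space \<Rightarrow> real) set" and N :: "('a \<Rightarrow> real) \<Rightarrow> real"
  shows
   "(quasi_BFS X N \<and> in_A X N \<longrightarrow>
       saturation_property (kothe X) \<and> BFS (kothe X) (kothe_norm X N) \<and>
       in_A (kothe X) (kothe_norm X N) \<and> A_const (kothe X) (kothe_norm X N) \<le> A_const X N) \<and>
    (BFS X N \<and> fatou_property X N \<longrightarrow>
       (in_A X N \<longleftrightarrow> in_A (kothe X) (kothe_norm X N)) \<and>
       (in_A X N \<longrightarrow> A_const (kothe X) (kothe_norm X N) = A_const X N)) \<and>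
    (quasi_BFS X N \<and> in_A_strong X N \<longrightarrow>
       saturation_property (kothe X) \<and> BFS (kothe X) (kothe_norm X N) \<and>
       in_A_strong (kothe X) (kothe_norm X N) \<and> A_strong_const (kothe X) (kothe_norm X N) \<le> A_strong_const X N) \<and>
    (BFS X N \<and> fatou_property X N \<longrightarrow>
       (in_A_strong X N \<longleftrightarrow> in_A_strong (kothe X) (kothe_norm X N)) \<and>
       (in_A_strong X N \<longrightarrow> A_strong_const (kothe X) (kothe_norm X N) = A_strong_const X N)) \<and>
    (quasi_BFS X N \<and> in_A_sparse X N \<longrightarrow>
       saturation_property (kothe X) \<and> BFS (kothe X) (kothe_norm X N) \<and>
       in_A_sparse (kothe X) (kothe_norm X N) \<and> A_sparse_const (kothe X) (kothe_norm X N) \<le> A_sparse_const X N) \<and>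
    (BFS X N \<and> fatou_property X N \<longrightarrow>
       (in_A_sparse X N \<longleftrightarrow> in_A_sparse (kothe X) (kothe_norm X N)) \<and>
       (in_A_sparse X N \<longrightarrow> A_sparse_const (kothe X) (kothe_norm X N) = A_sparse_const X N))"
proof -
  have p1: "quasi_BFS X N \<and> in_A X N \<longrightarrow>
       saturation_property (kothe X) \<and> BFS (kothe X) (kothe_norm X N) \<and>
       in_A (kothe X) (kothe_norm X N) \<and> A_const (kothe X) (kothe_norm X N) \<le> A_const X N"
    using qbfs.part_A[of X N] unfolding qbfs_def by blast
  have p2: "BFS X N \<and> fatou_property X N \<longrightarrow>
       (in_A X N \<longleftrightarrow> in_A (kothe X) (kothe_norm X N)) \<and>
       (in_A X N \<longrightarrow> A_const (kothe X) (kothe_norm X N) = A_const X N)"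
    using bfsf.part_A_eq BFS_bfsf by blast
  have p3: "quasi_BFS X N \<and> in_A_strong X N \<longrightarrow>
       saturation_property (kothe X) \<and> BFS (kothe X) (kothe_norm X N) \<and>
       in_A_strong (kothe X) (kothe_norm X N) \<and> A_strong_const (kothe X) (kothe_norm X N) \<le> A_strong_const X N"
    using qbfs.part_adm[of X N disjoint_cubes, OF _ good_adm_disjoint]
    unfolding qbfs_def in_A_strong_def A_strong_const_def by blast
  have p4: "BFS X N \<and> fatou_property X N \<longrightarrow>
       (in_A_strong X N \<longleftrightarrow> in_A_strong (kothe X) (kothe_norm X N)) \<and>
       (in_A_strong X N \<longrightarrow> A_strong_const (kothe X) (kothe_norm X N) = A_strong_const X N)"
    using bfsf.part_adm_eq[OF _ good_adm_disjoint] BFS_bfsf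
    unfolding in_A_strong_def A_strong_const_def by blast
  have p5: "quasi_BFS X N \<and> in_A_sparse X N \<longrightarrow>
       saturation_property (kothe X) \<and> BFS (kothe X) (kothe_norm X N) \<and>
       in_A_sparse (kothe X) (kothe_norm X N) \<and> A_sparse_const (kothe X) (kothe_norm X N) \<le> A_sparse_const X N"
    using qbfs.part_adm[of X N sparse, OF _ good_adm_sparse]
    unfolding qbfs_def in_A_sparse_def A_sparse_const_def by blast
  have p6: "BFS X N \<and> fatou_property X N \<longrightarrow>
       (in_A_sparse X N \<longleftrightarrow> in_A_sparse (kothe X) (kothe_norm X N)) \<and>
       (in_A_sparse X N \<longrightarrow> A_sparse_const (kothe X) (kothe_norm X N) = A_sparse_const X N)"
    using bfsf.part_adm_eq[OF _ good_adm_sparse] BFS_bfsf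
    unfolding in_A_sparse_def A_sparse_const_def by blast
  show ?thesis by (intro conjI p1 p2 p3 p4 p5 p6)
qed


end
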